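(* Let $\boldsymbol\alpha=\rho_{(n,m)}(\mathbf z)$ with $\mathbf z\in\mathbb C^m$. For each $k=1,\dots,n+1$, the coherent state $\Phi^{(\hbar)}_{\boldsymbol\alpha}$ is an eigenfunction of the operator $\mathbf A_k=\mathbf M\mathbf E_k\mathbf M^{-1}$ with eigenvalue $\overline{\alpha_k}$: $\mathbf A_k\Phi^{(\hbar)}_{\boldsymbol\alpha}=\overline{\alpha_k}\,\Phi^{(\hbar)}_{\boldsymbol\alpha}$. Moreover $\Phi^{(\hbar)}_{\boldsymbol\alpha}=\mathbf M\, e^{\mathbf x\cdot\boldsymbol\alpha/\hbar}$ and $\mathbf E_k e^{\mathbf x\cdot\boldsymbol\alpha/\hbar}=\overline{\alpha_k}\,e^{\mathbf x\cdot\boldsymbol\alpha/\hbar}$ (functions of $\mathbf x\in S^n$).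
   Context: $(n,m)$ is one of $(2,2),(3,4),(5,8)$, $\hbar>0$. For $\mathbf x\in\mathbb R^{n+1}$, $\boldsymbol\alpha\in\mathbb C^{n+1}$, $\mathbf x\cdot\boldsymbol\alpha=\sum_j x_j\overline{\alpha_j}$. The map $\rho_{(n,m)}=(\rho_1,\dots,\rho_{n+1}):\mathbb C^m\to\mathbb C^{n+1}$ is defined by: for $(2,2)$: $\rho_1=\tfrac12(z_2^2-z_1^2)$, $\rho_2=\tfrac{i}{2}(z_1^2+z_2^2)$, $\rho_3=z_1z_2$; for $(3,4)$: $\rho_1=z_1z_3+z_2z_4$, $\rho_2=i(z_1z_3-z_2z_4)$, $\rho_3=i(z_1z_4+z_2z_3)$, $\rho_4=z_1z_4-z_2z_3$; for $(5,8)$: $\rho_1=i(-z_1z_6+z_3z_8+z_2z_5-z_4z_7)$, $\rho_2=z_1z_6+z_3z_8+z_2z_5+z_4z_7$, $\rho_3=z_2z_6+z_3z_7-z_1z_5-z_4z_8$, $\rho_4=i(-z_1z_5+z_4z_8-z_2z_6+z_3z_7)$, $\rho_5=i(-z_1z_8-z_2z_7-z_3z_6-z_4z_5)$, $\rho_6=z_1z_8+z_2z_7-z_3z_6-z_4z_5$; its image lies in $\{\boldsymbol\alpha:\sum_j\alpha_j^2=0\}$. The coherent state is $\Phi^{(\hbar)}_{\boldsymbol\alpha}(\mathbf x)=\sum_{\ell\ge0}\frac{\sqrt{2\ell+n-1}}{\ell!\sqrt{n-1}}\big(\frac{\mathbf x\cdot\boldsymbol\alpha}{\hbar}\big)^\ell$,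 $\mathbf x\in S^n$. $\Delta_{S^n}$ is the normalized spherical Laplacian on $L^2(S^n)$, the self-adjoint operator acting on spherical harmonics of degree $k$ by the scalar $(k+\frac{n-1}{2})^2$. Define by functional calculus $\mathbf M=\sqrt{\tfrac{2}{n-1}}\,\Delta_{S^n}^{1/4}$ and $\mathbf N=\hbar(\sqrt{\Delta_{S^n}}-\tfrac{n-1}{2})$. Let $\tilde{\mathbf L}_{kj}$ be the restriction to $S^n$ of the angular momentum vector field $y_k\partial_{y_j}-y_j\partial_{y_k}$ on $\mathbb R^{n+1}$ (tangent to $S^n$), and let $\mathbf E_k=\sum_{j=1}^{n+1}(-i x_j)(-i\hbar\tilde{\mathbf L}_{kj})+x_k\mathbf N$, where $x_j$ denotes multiplication by the $j$-th coordinate on $S^n$. Set $\mathbf A_k=\mathbf M\mathbf E_k\mathbf M^{-1}$. *)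

theory Defs
  imports "HOL-Analysis.Analysis"
begin

text \<open>Points of R^(n+1) are functions nat => real, coordinates indexed by {1..n+1},
  extensional (value undefined outside the index set), as in the product measure PiM.\<close>

definition Rn :: "nat \<Rightarrow> (nat \<Rightarrow> real) measure" where
  "Rn n = PiM {1..n+1} (\<lambda>_. lborel)"

definition sqnorm :: "nat \<Rightarrow> (nat \<Rightarrow> real) \<Rightarrow> real" where
  "sqnorm n x = (\<Sum>j=1..n+1. (x j)\<^sup>2)"

definition Sph :: "nat \<Rightarrow> (nat \<Rightarrow> real) set" where
  "Sph n = {x \<in> PiE {1..n+1} (\<lambda>_. UNIV). sqnorm n x = 1}"

definition unit_ball_n :: "nat \<Rightarrow> (nat \<Rightarrow> real) set" where
  "unit_ball_n n = {x \<in> space (Rn n). sqnorm n x \<le> 1}"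

definition nrm :: "nat \<Rightarrow> (nat \<Rightarrow> real) \<Rightarrow> (nat \<Rightarrow> real)" where
  "nrm n x = restrict (\<lambda>i. x i / sqrt (sqnorm n x)) {1..n+1}"

text \<open>Surface integral over S^n via the cone formula
  int_{S^n} h d sigma = (n+1) * int_{|x| <= 1} h(x/|x|) dx.\<close>
definition sph_int :: "nat \<Rightarrow> ((nat \<Rightarrow> real) \<Rightarrow> complex) \<Rightarrow> complex" where
  "sph_int n h = of_nat (n+1) *
     integral\<^sup>L (Rn n) (\<lambda>x. indicator (unit_ball_n n) x *\<^sub>R h (nrm n x))"

definition sph_L2 :: "nat \<Rightarrow> ((nat \<Rightarrow> real) \<Rightarrow> complex) \<Rightarrow> bool" where
  "sph_L2 n f \<longleftrightarrow>
     (\<lambda>x. indicator (unit_ball_n n) x *\<^sub>R f (nrm n x)) \<in> borel_measurable (Rn n) \<and>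
     integrable (Rn n) (\<lambda>x. indicator (unit_ball_n n) x * (cmod (f (nrm n x)))\<^sup>2)"

definition sph_inner :: "nat \<Rightarrow> ((nat \<Rightarrow> real) \<Rightarrow> complex) \<Rightarrow> ((nat \<Rightarrow> real) \<Rightarrow> complex) \<Rightarrow> complex" where
  "sph_inner n f g = sph_int n (\<lambda>x. f x * cnj (g x))"

definition sec_partial :: "((nat \<Rightarrow> real) \<Rightarrow> complex) \<Rightarrow> nat \<Rightarrow> (nat \<Rightarrow> real) \<Rightarrow> complex" where
  "sec_partial P j x =
     vector_derivative (\<lambda>s. vector_derivative (\<lambda>t. P (x(j := x j + t))) (at s)) (at 0)"

definition hom_harm_poly :: "nat \<Rightarrow> nat \<Rightarrow> ((nat \<Rightarrow> real) \<Rightarrow> complex) \<Rightarrow> bool" where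
  "hom_harm_poly n k P \<longleftrightarrow>
     (\<exists>(c :: (nat \<Rightarrow> nat) \<Rightarrow> complex) Bs. finite Bs \<and>
        (\<forall>\<beta>\<in>Bs. (\<Sum>j=1..n+1. \<beta> j) = k) \<and>
        (\<forall>x. P x = (\<Sum>\<beta>\<in>Bs. c \<beta> * (\<Prod>j=1..n+1. (complex_of_real (x j)) ^ (\<beta> j))))) \<and>
     (\<forall>x. (\<Sum>j=1..n+1. sec_partial P j x) = 0)"

definition sph_harm :: "nat \<Rightarrow> nat \<Rightarrow> ((nat \<Rightarrow> real) \<Rightarrow> complex) \<Rightarrow> bool" where
  "sph_harm n k Y \<longleftrightarrow> (\<exists>P. hom_harm_poly n k P \<and> (\<forall>x\<in>Sph n. Y x = P x))"

text \<open>Eigenvalue of the normalized spherical Laplacian on degree-k harmonics.\<close>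
definition lapl_ev :: "nat \<Rightarrow> nat \<Rightarrow> real" where
  "lapl_ev n k = (real k + (real n - 1) / 2)\<^sup>2"

text \<open>Functional calculus: fcalc n F f g means  g = F(Delta_{S^n}) f  in L^2(S^n)
  (f in the domain). Since Delta is diagonal on the complete orthogonal decomposition of
  L^2(S^n) into spherical harmonics, this holds iff f, g are in L^2 and
  <g, Y> = F(lambda_k) <f, Y> for every spherical harmonic Y of degree k.\<close>
definition fcalc :: "nat \<Rightarrow> (real \<Rightarrow> real) \<Rightarrow> ((nat \<Rightarrow> real) \<Rightarrow> complex) \<Rightarrow> ((nat \<Rightarrow> real) \<Rightarrow> complex) \<Rightarrow> bool" where
  "fcalc n F f g \<longleftrightarrow> sph_L2 n f \<and> sph_L2 n g \<and>
     (\<forall>k Y. sph_harm n k Y \<longrightarrow>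
        sph_inner n g Y = complex_of_real (F (lapl_ev n k)) * sph_inner n f Y)"

definition M_op :: "nat \<Rightarrow> ((nat \<Rightarrow> real) \<Rightarrow> complex) \<Rightarrow> ((nat \<Rightarrow> real) \<Rightarrow> complex) \<Rightarrow> bool" where
  "M_op n = fcalc n (\<lambda>l. sqrt (2 / (real n - 1)) * l powr (1/4))"

definition N_op :: "nat \<Rightarrow> real \<Rightarrow> ((nat \<Rightarrow> real) \<Rightarrow> complex) \<Rightarrow> ((nat \<Rightarrow> real) \<Rightarrow> complex) \<Rightarrow> bool" where
  "N_op n hbar = fcalc n (\<lambda>l. hbar * (sqrt l - (real n - 1) / 2))"

text \<open>Flow of the vector field y_k d/dy_j - y_j d/dy_k (rotation in the (j,k)-plane).\<close>
definition rot :: "nat \<Rightarrow> nat \<Rightarrow> real \<Rightarrow> (nat \<Rightarrow> real) \<Rightarrow> (nat \<Rightarrow> real)" where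
  "rot k j t x = (if k = j then x else
     x(j := x j * cos t + x k * sin t, k := x k * cos t - x j * sin t))"

definition Lt :: "nat \<Rightarrow> nat \<Rightarrow> ((nat \<Rightarrow> real) \<Rightarrow> complex) \<Rightarrow> (nat \<Rightarrow> real) \<Rightarrow> complex" where
  "Lt k j f x = vector_derivative (\<lambda>t. f (rot k j t x)) (at 0)"

definition E_op :: "nat \<Rightarrow> real \<Rightarrow> nat \<Rightarrow> ((nat \<Rightarrow> real) \<Rightarrow> complex) \<Rightarrow> ((nat \<Rightarrow> real) \<Rightarrow> complex) \<Rightarrow> bool" where
  "E_op n hbar k f g \<longleftrightarrow> (\<exists>Nf. N_op n hbar f Nf \<and>
     (\<forall>x\<in>Sph n. (\<forall>j\<in>{1..n+1}. (\<lambda>t. f (rot k j t x)) differentiable (at 0)) \<and>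
        g x = (\<Sum>j=1..n+1. (- \<i> * complex_of_real (x j)) * (- \<i> * complex_of_real hbar * Lt k j f x))
              + complex_of_real (x k) * Nf x))"

text \<open>A_k = M E_k M^(-1):  A_k f = g  iff  M h = f, E_k h = u, M u = g for some h, u.\<close>
definition A_op :: "nat \<Rightarrow> real \<Rightarrow> nat \<Rightarrow> ((nat \<Rightarrow> real) \<Rightarrow> complex) \<Rightarrow> ((nat \<Rightarrow> real) \<Rightarrow> complex) \<Rightarrow> bool" where
  "A_op n hbar k f g \<longleftrightarrow> (\<exists>h u. M_op n h f \<and> E_op n hbar k h u \<and> M_op n u g)"

definition dotc :: "nat \<Rightarrow> (nat \<Rightarrow> real) \<Rightarrow> (nat \<Rightarrow> complex) \<Rightarrow> complex" where
  "dotc n x \<alpha> = (\<Sum>j=1..n+1. complex_of_real (x j) * cnj (\<alpha> j))"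

definition coh :: "nat \<Rightarrow> real \<Rightarrow> (nat \<Rightarrow> complex) \<Rightarrow> (nat \<Rightarrow> real) \<Rightarrow> complex" where
  "coh n hbar \<alpha> x = (\<Sum>l. complex_of_real (sqrt (2 * real l + real n - 1) / (fact l * sqrt (real n - 1)))
                         * (dotc n x \<alpha> / complex_of_real hbar) ^ l)"

definition rho22 :: "(nat \<Rightarrow> complex) \<Rightarrow> nat \<Rightarrow> complex" where
  "rho22 z j = (if j = 1 then ((z 2)\<^sup>2 - (z 1)\<^sup>2) / 2
     else if j = 2 then \<i> / 2 * ((z 1)\<^sup>2 + (z 2)\<^sup>2)
     else if j = 3 then z 1 * z 2 else 0)"

definition rho34 :: "(nat \<Rightarrow> complex) \<Rightarrow> nat \<Rightarrow> complex" where
  "rho34 z j = (if j = 1 then z 1 * z 3 + z 2 * z 4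
     else if j = 2 then \<i> * (z 1 * z 3 - z 2 * z 4)
     else if j = 3 then \<i> * (z 1 * z 4 + z 2 * z 3)
     else if j = 4 then z 1 * z 4 - z 2 * z 3 else 0)"

definition rho58 :: "(nat \<Rightarrow> complex) \<Rightarrow> nat \<Rightarrow> complex" where
  "rho58 z j = (if j = 1 then \<i> * (- z 1 * z 6 + z 3 * z 8 + z 2 * z 5 - z 4 * z 7)
     else if j = 2 then z 1 * z 6 + z 3 * z 8 + z 2 * z 5 + z 4 * z 7
     else if j = 3 then z 2 * z 6 + z 3 * z 7 - z 1 * z 5 - z 4 * z 8
     else if j = 4 then \<i> * (- z 1 * z 5 + z 4 * z 8 - z 2 * z 6 + z 3 * z 7)
     else if j = 5 then \<i> * (- z 1 * z 8 - z 2 * z 7 - z 3 * z 6 - z 4 * z 5)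
     else if j = 6 then z 1 * z 8 + z 2 * z 7 - z 3 * z 6 - z 4 * z 5 else 0)"

definition rho :: "nat \<Rightarrow> nat \<Rightarrow> (nat \<Rightarrow> complex) \<Rightarrow> nat \<Rightarrow> complex" where
  "rho n m = (if (n, m) = (2, 2) then rho22 else if (n, m) = (3, 4) then rho34
              else if (n, m) = (5, 8) then rho58 else (\<lambda>_ _. 0))"

end

theory Submission
  imports Defs
begin

interpretation lbprod: product_sigma_finite "\<lambda>_::nat. lborel :: real measure"
  by standard

lemma meas_comp[measurable]: "(\<lambda>x. x i) \<in> borel_measurable (PiM I (\<lambda>_::nat. lborel :: real measure))"
proof (cases "i \<in> I")
  case True then show ?thesis by measurable
next
  case False
  have "(\<lambda>x. undefined) \<in> borel_measurable (PiM I (\<lambda>_::nat. lborel :: real measure))" by simp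
  then show ?thesis
    by (rule measurable_cong[THEN iffD1, rotated]) (use False in \<open>auto simp: space_PiM PiE_def extensional_def\<close>)
qed

definition sc :: "nat set \<Rightarrow> real \<Rightarrow> (nat \<Rightarrow> real) \<Rightarrow> (nat \<Rightarrow> real)" where
  "sc I c x = restrict (\<lambda>i. c * x i) I"

lemma sc_meas[measurable]: "sc I c \<in> PiM I (\<lambda>_. lborel) \<rightarrow>\<^sub>M PiM I (\<lambda>_::nat. lborel :: real measure)"
  unfolding sc_def by measurable

lemma emeasure_lborel_scale:
  assumes "c > 0" "A \<in> sets lborel"
  shows "ennreal c * emeasure lborel ((*) c -` A) = emeasure (lborel::real measure) A"
proof -
  have "emeasure lborel A = emeasure (density (distr lborel borel ((*) c)) (\<lambda>_. \<bar>c\<bar>)) A"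
    using lborel_distr_mult'[of c] assms by simp
  also have "\<dots> = (\<integral>\<^sup>+x. ennreal c * indicator A x \<partial>distr lborel borel ((*) c))"
    using assms by (subst emeasure_density) (auto intro!: nn_integral_cong simp: mult.commute)
  also have "\<dots> = ennreal c * emeasure (distr lborel borel ((*) c)) A"
    using assms by (subst nn_integral_cmult) auto
  also have "\<dots> = ennreal c * emeasure lborel ((*) c -` A)"
    using assms by (subst emeasure_distr) auto
  finally show ?thesis by simp
qed

lemma PiM_scale:
  assumes I: "finite I" and c: "c > 0"
  shows "density (distr (PiM I (\<lambda>_. lborel)) (PiM I (\<lambda>_. lborel)) (sc I c)) (\<lambda>_. ennreal (c ^ card I))
       = PiM I (\<lambda>_::nat. lborel :: real measure)"
proof (rule lbprod.PiM_eqI[OF I])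
  fix A :: "nat \<Rightarrow> real set" assume A: "\<And>i. i \<in> I \<Longrightarrow> A i \<in> sets lborel"
  have pm: "\<And>i. i \<in> I \<Longrightarrow> (*) c -` A i \<in> sets borel"
  proof -
    fix i assume "i \<in> I"
    have "(*) c \<in> borel_measurable (borel :: real measure)" by simp
    from measurable_sets[OF this A[OF \<open>i \<in> I\<close>, simplified]] show "(*) c -` A i \<in> sets borel" by simp
  qed
  have pre: "sc I c -` Pi\<^sub>E I (A :: nat \<Rightarrow> real set) \<inter> space (PiM I (\<lambda>_. lborel)) = Pi\<^sub>E I (\<lambda>i. (*) c -` A i)"
    by (auto simp: sc_def space_PiM PiE_def Pi_def extensional_def)
  have "emeasure (density (distr (PiM I (\<lambda>_. lborel)) (PiM I (\<lambda>_. lborel)) (sc I c)) (\<lambda>_. ennreal (c ^ card I))) (Pi\<^sub>E I A)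
      = ennreal (c ^ card I) * emeasure (distr (PiM I (\<lambda>_. lborel)) (PiM I (\<lambda>_. lborel)) (sc I c)) (Pi\<^sub>E I A)"
    using A I by (subst emeasure_density) (auto intro!: sets_PiM_I_finite simp: nn_integral_cmult_indicator)
  also have "\<dots> = ennreal (c ^ card I) * emeasure (PiM I (\<lambda>_. lborel)) (Pi\<^sub>E I (\<lambda>i. (*) c -` A i))"
    using A I by (subst emeasure_distr) (auto intro!: sets_PiM_I_finite simp: pre)
  also have "\<dots> = ennreal (c ^ card I) * (\<Prod>i\<in>I. emeasure lborel ((*) c -` A i))"
    using pm I by (subst lbprod.emeasure_PiM) auto
  also have "\<dots> = (\<Prod>i\<in>I. ennreal c * emeasure lborel ((*) c -` A i))"
    using c by (simp add: prod.distrib ennreal_power prod_constant)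
  also have "\<dots> = (\<Prod>i\<in>I. emeasure lborel (A i))"
    using A c by (intro prod.cong refl emeasure_lborel_scale) auto
  finally show "emeasure (density (distr (PiM I (\<lambda>_. lborel)) (PiM I (\<lambda>_. lborel)) (sc I c)) (\<lambda>_. ennreal (c ^ card I))) (Pi\<^sub>E I A) = (\<Prod>i\<in>I. emeasure lborel (A i))" .
qed simp

lemma integral_sc:
  fixes f :: "(nat \<Rightarrow> real) \<Rightarrow> complex"
  assumes I: "finite I" and c: "c > 0" and f[measurable]: "f \<in> borel_measurable (PiM I (\<lambda>_. lborel))"
  shows "integral\<^sup>L (PiM I (\<lambda>_. lborel)) (\<lambda>x. f (sc I c x)) = integral\<^sup>L (PiM I (\<lambda>_. lborel)) f / c ^ card I"
proof -
  have "integral\<^sup>L (PiM I (\<lambda>_. lborel)) f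
     = integral\<^sup>L (density (distr (PiM I (\<lambda>_. lborel)) (PiM I (\<lambda>_. lborel)) (sc I c)) (\<lambda>_. ennreal (c ^ card I))) f"
    by (simp add: PiM_scale[OF I c])
  also have "\<dots> = integral\<^sup>L (distr (PiM I (\<lambda>_. lborel)) (PiM I (\<lambda>_. lborel)) (sc I c)) (\<lambda>x. (c ^ card I) *\<^sub>R f x)"
    using c by (subst integral_density) auto
  also have "\<dots> = (c ^ card I) *\<^sub>R integral\<^sup>L (PiM I (\<lambda>_. lborel)) (\<lambda>x. f (sc I c x))"
    by (subst integral_distr) auto
  finally show ?thesis using c by (simp add: field_simps scaleR_conv_of_real del: of_real_power)
qed

lemma lborel_int_zero:
  fixes u v :: "real \<Rightarrow> complex"
  assumes R: "R > 0"
    and um[measurable]: "u \<in> borel_measurable lborel"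
    and ub: "\<And>t. norm (u t) \<le> B"
    and cont: "continuous_on UNIV v"
    and S: "finite S"
    and der: "\<And>t. t \<notin> S \<Longrightarrow> (v has_vector_derivative u t) (at t)"
    and supp: "\<And>t. \<bar>t\<bar> \<ge> R \<Longrightarrow> v t = 0 \<and> u t = 0"
  shows "integral\<^sup>L lborel u = 0"
proof -
  have ueq: "u = (\<lambda>t. indicator {-R..R} t *\<^sub>R u t)"
    using supp by (auto simp: indicator_def fun_eq_iff abs_if split: if_splits)
  have int: "integrable lborel (\<lambda>t. indicator {-R..R} t *\<^sub>R u t)"
    by (rule integrableI_bounded_set_indicator[where B=B]) (use R in \<open>auto simp: ub emeasure_lborel_Icc\<close>)
  have h1: "((\<lambda>t. indicator {-R..R} t *\<^sub>R u t) has_integral integral\<^sup>L lborel (\<lambda>t. indicator {-R..R} t *\<^sub>R u t)) UNIV"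
    by (rule has_integral_integral_lborel[OF int])
  have "(u has_integral (v R - v (-R))) {-R..R}"
    using R by (intro fundamental_theorem_of_calculus_interior_strong[OF S])
      (auto intro: der continuous_on_subset[OF cont])
  then have "(u has_integral 0) {-R..R}"
    using supp[of R] supp[of "-R"] R by simp
  then have "((\<lambda>t. if t \<in> {-R..R} then u t else 0) has_integral 0) UNIV"
    by (subst has_integral_restrict_UNIV)
  moreover have "(\<lambda>t. if t \<in> {-R..R} then u t else 0) = (\<lambda>t. indicator {-R..R} t *\<^sub>R u t)"
    by (auto simp: indicator_def)
  ultimately have "((\<lambda>t. indicator {-R..R} t *\<^sub>R u t) has_integral 0) UNIV" by simp
  with h1 show ?thesis
    using ueq has_integral_unique by metis
qed

lemma PiM_int_zero:
  fixes U V :: "(nat \<Rightarrow> real) \<Rightarrow> complex"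
  assumes I: "finite I" and j: "j \<in> I" and R: "R > 0"
    and Uint: "integrable (PiM I (\<lambda>_. lborel)) U"
    and loc: "\<And>x. x \<in> space (PiM (I - {j}) (\<lambda>_. lborel)) \<Longrightarrow>
        continuous_on UNIV (\<lambda>t. V (x(j:=t))) \<and>
        (\<exists>S. finite S \<and> (\<forall>t. t \<notin> S \<longrightarrow> ((\<lambda>t. V (x(j:=t))) has_vector_derivative U (x(j:=t))) (at t))) \<and>
        (\<forall>t. \<bar>t\<bar> \<ge> R \<longrightarrow> V (x(j:=t)) = 0 \<and> U (x(j:=t)) = 0) \<and>
        (\<exists>B. \<forall>t. norm (U (x(j:=t))) \<le> B)"
  shows "integral\<^sup>L (PiM I (\<lambda>_. lborel)) U = 0"
proof -
  have Ieq: "I = insert j (I - {j})" using j by auto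
  have Um: "U \<in> borel_measurable (PiM (insert j (I - {j})) (\<lambda>_. lborel))"
    using Uint Ieq by auto
  have "integral\<^sup>L (PiM I (\<lambda>_. lborel)) U = integral\<^sup>L (PiM (insert j (I - {j})) (\<lambda>_. lborel)) U"
    using Ieq by simp
  also have "\<dots> = (\<integral>x. (\<integral>y. U (x(j:=y)) \<partial>lborel) \<partial>PiM (I - {j}) (\<lambda>_. lborel))"
    using I Uint Ieq by (intro lbprod.product_integral_insert) auto
  moreover have inner: "\<forall>x \<in> space (PiM (I - {j}) (\<lambda>_. lborel)). (\<integral>y. U (x(j:=y)) \<partial>lborel) = 0"
  proof
    fix x :: "nat \<Rightarrow> real" assume x: "x \<in> space (PiM (I - {j}) (\<lambda>_. lborel))"
    have um: "(\<lambda>y. U (x(j := y))) \<in> borel_measurable lborel"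
      using measurable_comp[OF measurable_component_update Um, OF x] by (simp add: comp_def fun_upd_def)
    from loc[OF x] obtain S B where S: "finite S" "\<forall>t. t \<notin> S \<longrightarrow> ((\<lambda>t. V (x(j:=t))) has_vector_derivative U (x(j:=t))) (at t)"
      and c: "continuous_on UNIV (\<lambda>t. V (x(j:=t)))"
      and s: "\<forall>t. \<bar>t\<bar> \<ge> R \<longrightarrow> V (x(j:=t)) = 0 \<and> U (x(j:=t)) = 0"
      and b: "\<forall>t. norm (U (x(j:=t))) \<le> B" by blast
    show "(\<integral>y. U (x(j:=y)) \<partial>lborel) = 0"
      by (rule lborel_int_zero[OF R um _ c S(1)]) (use S b s in auto)
  qed
  have "(\<integral>x. (\<integral>y. U (x(j:=y)) \<partial>lborel) \<partial>PiM (I - {j}) (\<lambda>_. lborel)) = (\<integral>x. 0 \<partial>PiM (I - {j}) (\<lambda>_. lborel :: real measure))"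
    by (rule Bochner_Integration.integral_cong) (use inner in auto)
  ultimately show ?thesis by simp
qed

definition mnm :: "nat set \<Rightarrow> (nat \<Rightarrow> nat) \<Rightarrow> (nat \<Rightarrow> real) \<Rightarrow> real" where
  "mnm I e x = (\<Prod>i\<in>I. x i ^ e i)"

definition pol :: "nat set \<Rightarrow> (nat \<Rightarrow> nat) set \<Rightarrow> ((nat \<Rightarrow> nat) \<Rightarrow> complex) \<Rightarrow> ((nat \<Rightarrow> nat) \<Rightarrow> (nat \<Rightarrow> nat)) \<Rightarrow> (nat \<Rightarrow> real) \<Rightarrow> complex" where
  "pol I Bs a e x = (\<Sum>\<gamma>\<in>Bs. a \<gamma> * complex_of_real (mnm I (e \<gamma>) x))"

definition dco :: "nat \<Rightarrow> ((nat \<Rightarrow> nat) \<Rightarrow> complex) \<Rightarrow> ((nat \<Rightarrow> nat) \<Rightarrow> (nat \<Rightarrow> nat)) \<Rightarrow> (nat \<Rightarrow> nat) \<Rightarrow> complex" where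
  "dco j a e = (\<lambda>\<gamma>. a \<gamma> * of_nat (e \<gamma> j))"

definition dex :: "nat \<Rightarrow> ((nat \<Rightarrow> nat) \<Rightarrow> (nat \<Rightarrow> nat)) \<Rightarrow> (nat \<Rightarrow> nat) \<Rightarrow> (nat \<Rightarrow> nat)" where
  "dex j e = (\<lambda>\<gamma>. (e \<gamma>)(j := e \<gamma> j - 1))"

lemma mono_split:
  assumes "finite I" "j \<in> I"
  shows "mnm I e x = x j ^ e j * mnm (I - {j}) e x"
  unfolding mnm_def using assms by (subst prod.remove[of _ j]) auto

lemma mono_upd:
  assumes "finite I" "j \<in> I"
  shows "mnm I e (x(j:=t)) = t ^ e j * mnm (I - {j}) e x"
proof -
  have "mnm I e (x(j:=t)) = (x(j:=t)) j ^ e j * (\<Prod>i\<in>I - {j}. (x(j:=t)) i ^ e i)"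
    unfolding mnm_def using assms by (subst prod.remove[of _ j]) auto
  also have "(\<Prod>i\<in>I - {j}. (x(j:=t)) i ^ e i) = mnm (I - {j}) e x"
    unfolding mnm_def by (intro prod.cong) auto
  finally show ?thesis by (simp add: fun_upd_def)
qed

lemma mono_deriv:
  assumes "finite I" "j \<in> I"
  shows "((\<lambda>t. mnm I e (x(j:=t))) has_real_derivative (of_nat (e j) * mnm I (e(j := e j - 1)) (x(j:=t)))) (at t)"
proof -
  have "mnm I (e(j := e j - 1)) (x(j:=t)) = t ^ (e j - 1) * mnm (I - {j}) (e(j := e j - 1)) x"
    using mono_upd[OF assms] by simp
  also have "mnm (I - {j}) (e(j := e j - 1)) x = mnm (I - {j}) e x"
    unfolding mnm_def by (intro prod.cong) auto
  finally have eq: "mnm I (e(j := e j - 1)) (x(j:=t)) = t ^ (e j - 1) * mnm (I - {j}) e x" .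
  have "((\<lambda>t. t ^ e j * mnm (I - {j}) e x) has_real_derivative (of_nat (e j) * t ^ (e j - 1)) * mnm (I - {j}) e x) (at t)"
    by (intro DERIV_cmult_right) (use DERIV_pow[of "e j" t UNIV] in simp)
  then show ?thesis
    unfolding eq mono_upd[OF assms, of e x] by (simp add: mult.assoc)
qed

lemma pol_deriv:
  assumes "finite I" "j \<in> I"
  shows "((\<lambda>t. pol I Bs a e (x(j:=t))) has_vector_derivative pol I Bs (dco j a e) (dex j e) (x(j:=t))) (at t)"
  unfolding pol_def dco_def dex_def
  apply (rule has_vector_derivative_eq_rhs)
   apply (rule has_vector_derivative_sum)
   apply (rule has_vector_derivative_mult[OF has_vector_derivative_const])
   apply (rule has_vector_derivative_of_real)
   apply (rule mono_deriv[OF assms])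
  apply (auto intro!: sum.cong)
  done

lemma pol_cnj: "pol I Bs (\<lambda>\<gamma>. cnj (a \<gamma>)) e x = cnj (pol I Bs a e x)"
  unfolding pol_def by (simp add: cnj_sum)

lemma dco_cnj: "dco j (\<lambda>\<gamma>. cnj (a \<gamma>)) e = (\<lambda>\<gamma>. cnj (dco j a e \<gamma>))"
  unfolding dco_def by auto

lemma mono_euler:
  assumes "finite I" "j \<in> I"
  shows "of_nat (e j) * x j * mnm I (e(j := e j - 1)) x = of_nat (e j) * mnm I e x"
proof (cases "e j")
  case 0 then show ?thesis by simp
next
  case (Suc m)
  have "mnm I (e(j := e j - 1)) x = x j ^ m * mnm (I - {j}) (e(j := e j - 1)) x"
    using mono_split[OF assms, of "e(j := e j - 1)"] Suc by simp
  also have "mnm (I - {j}) (e(j := e j - 1)) x = mnm (I - {j}) e x"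
    unfolding mnm_def by (intro prod.cong) auto
  finally have a: "mnm I (e(j := e j - 1)) x = x j ^ m * mnm (I - {j}) e x" .
  have "mnm I e x = x j ^ Suc m * mnm (I - {j}) e x"
    using mono_split[OF assms, of e] Suc by simp
  then show ?thesis using a by simp
qed

lemma pol_euler:
  assumes "finite I" and deg: "\<And>\<gamma>. \<gamma> \<in> Bs \<Longrightarrow> (\<Sum>j\<in>I. e \<gamma> j) = k"
  shows "(\<Sum>j\<in>I. complex_of_real (x j) * pol I Bs (dco j a e) (dex j e) x) = of_nat k * pol I Bs a e x"
proof -
  have "(\<Sum>j\<in>I. complex_of_real (x j) * pol I Bs (dco j a e) (dex j e) x)
      = (\<Sum>j\<in>I. \<Sum>\<gamma>\<in>Bs. a \<gamma> * complex_of_real (of_nat (e \<gamma> j) * x j * mnm I ((e \<gamma>)(j := e \<gamma> j - 1)) x))"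
    unfolding pol_def dco_def dex_def
    by (simp add: sum_distrib_left algebra_simps)
  also have "\<dots> = (\<Sum>\<gamma>\<in>Bs. \<Sum>j\<in>I. a \<gamma> * complex_of_real (of_nat (e \<gamma> j) * x j * mnm I ((e \<gamma>)(j := e \<gamma> j - 1)) x))"
    by (rule sum.swap)
  also have "\<dots> = (\<Sum>\<gamma>\<in>Bs. a \<gamma> * (\<Sum>j\<in>I. complex_of_real (of_nat (e \<gamma> j) * x j * mnm I ((e \<gamma>)(j := e \<gamma> j - 1)) x)))"
    by (simp add: sum_distrib_left)
  also have "\<dots> = (\<Sum>\<gamma>\<in>Bs. a \<gamma> * (\<Sum>j\<in>I. complex_of_real (of_nat (e \<gamma> j) * mnm I (e \<gamma>) x)))"
    using assms(1) by (intro sum.cong refl arg_cong2[where f="(*)"] ; subst mono_euler) auto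
  also have "\<dots> = (\<Sum>\<gamma>\<in>Bs. a \<gamma> * (of_nat k * complex_of_real (mnm I (e \<gamma>) x)))"
  proof (intro sum.cong refl arg_cong2[where f="(*)"])
    fix \<gamma> assume "\<gamma> \<in> Bs"
    have "(\<Sum>j\<in>I. complex_of_real (of_nat (e \<gamma> j) * mnm I (e \<gamma>) x)) = of_nat (\<Sum>j\<in>I. e \<gamma> j) * complex_of_real (mnm I (e \<gamma>) x)"
      by (simp add: sum_distrib_right)
    then show "(\<Sum>j\<in>I. complex_of_real (of_nat (e \<gamma> j) * mnm I (e \<gamma>) x)) = of_nat k * complex_of_real (mnm I (e \<gamma>) x)"
      using deg[OF \<open>\<gamma> \<in> Bs\<close>] by simp
  qed
  also have "\<dots> = of_nat k * pol I Bs a e x"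
    unfolding pol_def by (simp add: sum_distrib_left algebra_simps)
  finally show ?thesis .
qed

lemma mono_scale:
  "mnm I e (\<lambda>i. x i / r) = mnm I e x / r ^ (\<Sum>i\<in>I. e i)"
  unfolding mnm_def by (simp add: power_divide prod_dividef power_sum)

lemma mono_bound:
  assumes "\<And>i. i \<in> I \<Longrightarrow> \<bar>x i\<bar> \<le> 1"
  shows "\<bar>mnm I e x\<bar> \<le> 1"
  unfolding mnm_def abs_prod using assms
  by (intro prod_le_1) (auto simp: power_abs intro: power_le_one)

lemma pol_bound:
  assumes "\<And>i. i \<in> I \<Longrightarrow> \<bar>x i\<bar> \<le> 1"
  shows "norm (pol I Bs a e x) \<le> (\<Sum>\<gamma>\<in>Bs. norm (a \<gamma>))"
  unfolding pol_def
  by (rule order.trans[OF norm_sum], intro sum_mono) (auto simp: norm_mult intro!: mult_left_le[OF mono_bound[OF assms]])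

definition Ev :: "nat set \<Rightarrow> (nat \<Rightarrow> complex) \<Rightarrow> (nat \<Rightarrow> real) \<Rightarrow> complex" where
  "Ev I b x = (\<Sum>i\<in>I. complex_of_real (x i) * b i)"

lemma Ev_upd:
  assumes "finite I" "j \<in> I"
  shows "Ev I b (x(j:=t)) = Ev I b x + complex_of_real (t - x j) * b j"
proof -
  have "Ev I b (x(j:=t)) = of_real t * b j + (\<Sum>i\<in>I - {j}. complex_of_real (x i) * b i)"
    unfolding Ev_def using assms by (subst sum.remove[of _ j]) (auto intro!: sum.cong)
  moreover have "Ev I b x = of_real (x j) * b j + (\<Sum>i\<in>I - {j}. complex_of_real (x i) * b i)"
    unfolding Ev_def using assms by (subst sum.remove[of _ j]) auto
  ultimately show ?thesis by (simp add: algebra_simps)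
qed

lemma Ev_deriv:
  assumes "finite I" "j \<in> I"
  shows "((\<lambda>t. Ev I b (x(j:=t))) has_vector_derivative b j) (at t)"
  unfolding Ev_upd[OF assms]
  by (rule has_vector_derivative_eq_rhs, (rule derivative_intros)+) (auto intro!: derivative_eq_intros)

lemma cpow_deriv: "((\<lambda>z::complex. z ^ l) has_field_derivative of_nat l * z ^ (l - 1)) (at z)"
  using DERIV_power[OF DERIV_ident, where x=z and s=UNIV and n=l] by simp

lemma Evpow_deriv:
  assumes "finite I" "j \<in> I"
  shows "((\<lambda>t. Ev I b (x(j:=t)) ^ l) has_vector_derivative of_nat l * Ev I b (x(j:=t)) ^ (l - 1) * b j) (at t)"
proof -
  have "(((\<lambda>z. z ^ l) \<circ> (\<lambda>t. Ev I b (x(j:=t)))) has_vector_derivative (b j * (of_nat l * Ev I b (x(j:=t)) ^ (l - 1)))) (at t)"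
    by (rule field_vector_diff_chain_at[OF Ev_deriv[OF assms]]) (rule cpow_deriv)
  then show ?thesis by (simp add: o_def algebra_simps)
qed

lemma Evpow_deriv2:
  assumes "finite I" "j \<in> I"
  shows "((\<lambda>t. of_nat l * Ev I b (x(j:=t)) ^ (l - 1) * b j) has_vector_derivative
            of_nat l * of_nat (l - 1) * Ev I b (x(j:=t)) ^ (l - 2) * (b j)^2) (at t)"
proof -
  have "((\<lambda>t. of_nat l * (Ev I b (x(j:=t)) ^ (l - 1) * b j)) has_vector_derivative
            of_nat l * (of_nat (l - 1) * Ev I b (x(j:=t)) ^ (l - 1 - 1) * b j * b j)) (at t)"
  proof -
    have "((\<lambda>t. Ev I b (x(j:=t)) ^ (l - 1) * b j) has_vector_derivative
            (of_nat (l - 1) * Ev I b (x(j:=t)) ^ (l - 1 - 1) * b j) * b j) (at t)"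
      using has_vector_derivative_mult[OF Evpow_deriv[OF assms, of b x "l - 1" t] has_vector_derivative_const[of "b j"]]
      by simp
    from has_vector_derivative_mult[OF has_vector_derivative_const[of "of_nat l"] this]
    show ?thesis by (simp add: mult.assoc)
  qed
  then show ?thesis by (simp add: algebra_simps power2_eq_square numeral_2_eq_2)
qed

lemma Ev_scale: "Ev I b (\<lambda>i. x i / r) = Ev I b x / of_real r"
  unfolding Ev_def by (simp add: sum_divide_distrib)

definition Fd :: "nat \<Rightarrow> real \<Rightarrow> real" where
  "Fd d u = (if d = 2 then ln u / 2 else u powr (1 - real d / 2) / (2 - real d))"

definition Wf :: "nat \<Rightarrow> real \<Rightarrow> real" where
  "Wf d s = Fd d (max (1/4) (min s 1)) - Fd d 1"

definition Wd :: "nat \<Rightarrow> real \<Rightarrow> real" where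
  "Wd d s = (if 1/4 < s \<and> s \<le> 1 then s powr (- (real d / 2)) / 2 else 0)"

lemma Fd_deriv:
  assumes "u > 0"
  shows "(Fd d has_real_derivative u powr (- (real d / 2)) / 2) (at u)"
proof (cases "d = 2")
  case True
  have "((\<lambda>u. ln u / 2) has_real_derivative inverse u / 2) (at u)"
    using assms by (auto intro!: derivative_eq_intros simp: field_simps)
  moreover have "u powr (- (real d / 2)) = inverse u" using True assms by (simp add: powr_minus)
  moreover have "Fd d = (\<lambda>u. ln u / 2)" using True by (simp add: Fd_def fun_eq_iff)
  ultimately show ?thesis by simp
next
  case False
  have ne: "2 - real d \<noteq> 0" using False by simp
  have D: "((\<lambda>u. u powr (1 - real d / 2) / (2 - real d)) has_real_derivative
          (1 - real d / 2) * u powr (1 - real d / 2 - 1) / (2 - real d)) (at u)"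
    using DERIV_cdivide[OF has_real_derivative_powr[OF assms, of "1 - real d / 2"], of "2 - real d"] by simp
  have eq: "(1 - real d / 2) * u powr (1 - real d / 2 - 1) / (2 - real d) = u powr (- (real d / 2)) / 2"
  proof -
    have "(1 - real d / 2) / (2 - real d) = 1/2" using ne by (simp add: field_simps)
    moreover have "1 - real d / 2 - 1 = - (real d / 2)" by simp
    ultimately show ?thesis by (simp only: times_divide_eq_left[symmetric] mult.commute[of "1 - real d / 2"]) (use False in \<open>simp add: divide_simps mult.commute\<close>)
  qed
  have "Fd d = (\<lambda>u. u powr (1 - real d / 2) / (2 - real d))" using False by (simp add: Fd_def fun_eq_iff)
  then show ?thesis using DERIV_cong[OF D eq] by simp
qed

lemma Fd_cont: "continuous_on {0<..} (Fd d)"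
  by (intro continuous_at_imp_continuous_on ballI DERIV_isCont[OF Fd_deriv]) simp

lemma Wf_deriv:
  assumes "s \<noteq> 1/4" "s \<noteq> 1"
  shows "(Wf d has_real_derivative Wd d s) (at s)"
proof -
  consider "s < 1/4" | "1/4 < s \<and> s < 1" | "1 < s" using assms by linarith
  then show ?thesis
  proof cases
    case 1
    have "((\<lambda>_. Fd d (1/4) - Fd d 1) has_real_derivative Wd d s) (at s)" using 1 by (simp add: Wd_def)
    then show ?thesis
      by (rule has_field_derivative_transform_within_open[where S="{..<1/4}"]) (use 1 in \<open>auto simp: Wf_def Wd_def\<close>)
  next
    case 2
    have "((\<lambda>s. Fd d s - Fd d 1) has_real_derivative Wd d s) (at s)"
      using Fd_deriv[of s d] 2 by (auto intro!: derivative_eq_intros simp: Wd_def)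
    then show ?thesis
      by (rule has_field_derivative_transform_within_open[where S="{1/4<..<1}"]) (use 2 in \<open>auto simp: Wf_def Wd_def\<close>)
  next
    case 3
    have "((\<lambda>_. 0) has_real_derivative Wd d s) (at s)" using 3 by (simp add: Wd_def)
    then show ?thesis
      by (rule has_field_derivative_transform_within_open[where S="{1<..}"]) (use 3 in \<open>auto simp: Wf_def Wd_def\<close>)
  qed
qed

lemma Wf_cont: "continuous_on UNIV (Wf d)"
proof -
  have "continuous_on UNIV (\<lambda>s. max (1/4) (min s (1::real)))"
    by (intro continuous_intros)
  moreover have "continuous_on ((\<lambda>s. max (1/4) (min s (1::real))) ` UNIV) (Fd d)"
    by (rule continuous_on_subset[OF Fd_cont]) auto
  ultimately have "continuous_on UNIV (\<lambda>s. Fd d (max (1/4) (min s 1)))"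
    using continuous_on_compose2 by blast
  then show ?thesis unfolding Wf_def by (intro continuous_intros)
qed

lemma Wf_zero: "s \<ge> 1 \<Longrightarrow> Wf d s = 0"
  by (simp add: Wf_def)

lemma Wf_bound: "\<exists>B. \<forall>s. \<bar>Wf d s\<bar> \<le> B"
proof -
  have "compact (Wf d ` {1/4..1})"
    by (intro compact_continuous_image continuous_on_subset[OF Wf_cont]) auto
  then obtain B where B: "\<forall>y\<in>Wf d ` {1/4..1}. norm y \<le> B"
    using compact_imp_bounded bounded_iff by metis
  have "\<bar>Wf d s\<bar> \<le> B" for s
  proof -
    have "Wf d s = Wf d (max (1/4) (min s 1))" by (simp add: Wf_def)
    then show ?thesis using B by auto
  qed
  then show ?thesis by blast
qed

lemma Wd_bound: "\<bar>Wd d s\<bar> \<le> (1/4) powr (- (real d / 2)) / 2"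
proof -
  have "s powr (- (real d / 2)) \<le> (1/4) powr (- (real d / 2))" if "1/4 < s" for s :: real
    using that by (intro powr_mono2') auto
  then show ?thesis by (auto simp: Wd_def)
qed

lemma Wf_meas[measurable]: "Wf d \<in> borel_measurable borel"
  by (rule borel_measurable_continuous_onI[OF Wf_cont])

lemma Wd_meas[measurable]: "Wd d \<in> borel_measurable borel"
  unfolding Wd_def by measurable

definition II :: "nat \<Rightarrow> nat set" where "II n = {1..n+1}"

lemma finite_II[simp]: "finite (II n)" by (simp add: II_def)

lemma sqnorm_II: "sqnorm n x = (\<Sum>i\<in>II n. (x i)^2)" by (simp add: sqnorm_def II_def)

lemma Rn_eq: "Rn n = PiM (II n) (\<lambda>_. lborel)" by (simp add: Rn_def II_def)

lemma Ev_meas[measurable]: "Ev I b \<in> borel_measurable (PiM J (\<lambda>_::nat. lborel :: real measure))"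
  unfolding Ev_def by measurable

lemma pol_meas[measurable]: "pol I Bs a e \<in> borel_measurable (PiM J (\<lambda>_::nat. lborel :: real measure))"
  unfolding pol_def mnm_def by measurable

lemma sqnorm_meas[measurable]: "sqnorm n \<in> borel_measurable (PiM J (\<lambda>_::nat. lborel :: real measure))"
  unfolding sqnorm_def by measurable

lemma nrm_meas[measurable]: "nrm n \<in> PiM (II n) (\<lambda>_. lborel) \<rightarrow>\<^sub>M PiM (II n) (\<lambda>_::nat. lborel :: real measure)"
  unfolding nrm_def II_def by measurable

lemma sqnorm_upd:
  assumes "j \<in> II n"
  shows "sqnorm n (x(j:=t)) = t^2 + (\<Sum>i\<in>II n - {j}. (x i)^2)"
  unfolding sqnorm_II using assms by (subst sum.remove[of _ j]) (auto intro!: sum.cong)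

lemma sqnorm_nonneg: "sqnorm n x \<ge> 0"
  unfolding sqnorm_def by (intro sum_nonneg) simp

lemma coord_le_sqnorm:
  assumes "i \<in> II n"
  shows "(x i)^2 \<le> sqnorm n x"
  unfolding sqnorm_II using assms by (intro member_le_sum) auto

lemma coord_le1:
  assumes "i \<in> II n" "sqnorm n x \<le> 1"
  shows "\<bar>x i\<bar> \<le> 1"
proof -
  have "(x i)^2 \<le> 1" using coord_le_sqnorm[OF assms(1), of x] assms(2) by simp
  then show ?thesis by (simp add: abs_square_le_1)
qed

lemma nrm_coord_le1:
  assumes "i \<in> II n"
  shows "\<bar>nrm n x i\<bar> \<le> 1"
proof (cases "sqnorm n x = 0")
  case True then show ?thesis using assms by (simp add: nrm_def II_def)
next
  case False
  then have pos: "sqnorm n x > 0" using sqnorm_nonneg[of n x] by simp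
  have "\<bar>x i\<bar> \<le> sqrt (sqnorm n x)"
    using coord_le_sqnorm[OF assms, of x] by (simp add: real_le_rsqrt)
  then show ?thesis using assms pos by (simp add: nrm_def divide_le_eq_1 abs_div II_def)
qed

lemma Ev_bound:
  assumes "\<And>i. i \<in> I \<Longrightarrow> \<bar>x i\<bar> \<le> 1"
  shows "norm (Ev I b x) \<le> (\<Sum>i\<in>I. norm (b i))"
  unfolding Ev_def
  by (rule order.trans[OF norm_sum], intro sum_mono) (auto simp: norm_mult intro!: mult_left_le_one_le assms)

lemma Ev_restrict: "Ev I b (restrict f I) = Ev I b f"
  unfolding Ev_def by (intro sum.cong) auto

lemma mnm_restrict: "mnm I e (restrict f I) = mnm I e f"
  unfolding mnm_def by (intro prod.cong) auto

lemma pol_restrict: "pol I Bs a e (restrict f I) = pol I Bs a e f"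
  unfolding pol_def by (simp add: mnm_restrict)

lemma pol_scale:
  assumes "\<And>\<gamma>. \<gamma> \<in> Bs \<Longrightarrow> (\<Sum>i\<in>I. \<gamma> i) = k"
  shows "pol I Bs a (\<lambda>\<gamma>. \<gamma>) (\<lambda>i. x i / r) = pol I Bs a (\<lambda>\<gamma>. \<gamma>) x / of_real r ^ k"
  unfolding pol_def mono_scale using assms by (simp add: sum_divide_distrib)

lemma cnj_borel: "(cnj :: complex \<Rightarrow> complex) \<in> borel_measurable borel"
  by (intro borel_measurable_continuous_onI continuous_on_cnj continuous_on_id)

lemma cnj_meas[measurable (raw)]: "f \<in> borel_measurable M \<Longrightarrow> (\<lambda>x. cnj (f x :: complex)) \<in> borel_measurable M"
  using measurable_compose[OF _ cnj_borel] by blast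

definition bdd_on :: "'a set \<Rightarrow> ('a \<Rightarrow> complex) \<Rightarrow> bool" where
  "bdd_on S f \<longleftrightarrow> (\<exists>B. \<forall>y\<in>S. norm (f y) \<le> B)"

lemma bdd_on_mult: "bdd_on S f \<Longrightarrow> bdd_on S g \<Longrightarrow> bdd_on S (\<lambda>y. f y * g y)"
proof -
  assume "bdd_on S f" "bdd_on S g"
  then obtain A B where A: "\<forall>y\<in>S. norm (f y) \<le> A" and B: "\<forall>y\<in>S. norm (g y) \<le> B" by (auto simp: bdd_on_def)
  have "norm (f y * g y) \<le> A * B" if "y \<in> S" for y
    unfolding norm_mult using A B that by (intro mult_mono) (auto intro: order.trans[OF norm_ge_zero])
  then show ?thesis by (auto simp: bdd_on_def)
qed

lemma bdd_on_add: "bdd_on S f \<Longrightarrow> bdd_on S g \<Longrightarrow> bdd_on S (\<lambda>y. f y + g y)"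
proof -
  assume "bdd_on S f" "bdd_on S g"
  then obtain A B where A: "\<forall>y\<in>S. norm (f y) \<le> A" and B: "\<forall>y\<in>S. norm (g y) \<le> B" by (auto simp: bdd_on_def)
  have "norm (f y + g y) \<le> A + B" if "y \<in> S" for y
    using A B that by (intro order.trans[OF norm_triangle_ineq] add_mono) auto
  then show ?thesis by (auto simp: bdd_on_def)
qed

lemma bdd_on_diff: "bdd_on S f \<Longrightarrow> bdd_on S g \<Longrightarrow> bdd_on S (\<lambda>y. f y - g y)"
proof -
  assume "bdd_on S f" "bdd_on S g"
  then obtain A B where A: "\<forall>y\<in>S. norm (f y) \<le> A" and B: "\<forall>y\<in>S. norm (g y) \<le> B" by (auto simp: bdd_on_def)
  have "norm (f y - g y) \<le> A + B" if "y \<in> S" for y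
    using A B that by (intro order.trans[OF norm_triangle_ineq4] add_mono) auto
  then show ?thesis by (auto simp: bdd_on_def)
qed

lemma bdd_on_const: "bdd_on S (\<lambda>_. z)"
  by (auto simp: bdd_on_def)

lemma bdd_on_real: "(\<And>y. y \<in> S \<Longrightarrow> \<bar>f y\<bar> \<le> B) \<Longrightarrow> bdd_on S (\<lambda>y. complex_of_real (f y))"
  by (auto simp: bdd_on_def)

lemma bdd_on_power: "bdd_on S f \<Longrightarrow> bdd_on S (\<lambda>y. f y ^ m)"
  by (induction m) (auto intro: bdd_on_mult bdd_on_const)

lemma finite_sq_level: "finite {t::real. t^2 + C = r}"
proof (rule finite_subset)
  show "{t::real. t^2 + C = r} \<subseteq> {sqrt (r - C), - sqrt (r - C)}"
  proof
    fix t :: real assume "t \<in> {t. t^2 + C = r}"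
    then have "t^2 = r - C" by simp
    then have "\<bar>t\<bar> = sqrt (r - C)" by (metis real_sqrt_abs)
    then show "t \<in> {sqrt (r - C), - sqrt (r - C)}" by (auto simp: abs_if split: if_splits)
  qed
qed simp

lemma ball_sets[measurable]: "unit_ball_n n \<in> sets (Rn n)"
  unfolding unit_ball_n_def Rn_eq by measurable

lemma ball_fin: "emeasure (Rn n) (unit_ball_n n) < \<infinity>"
proof -
  let ?A = "unit_ball_n n"
  have sub: "?A \<subseteq> Pi\<^sub>E (II n) (\<lambda>_. {-1..1})"
    using coord_le1 by (auto simp: unit_ball_n_def Rn_eq space_PiM PiE_def Pi_def II_def abs_le_iff)
  have "emeasure (Rn n) ?A \<le> emeasure (Rn n) (Pi\<^sub>E (II n) (\<lambda>_. {-1..1}))"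
    by (intro emeasure_mono sub) (simp add: Rn_eq sets_PiM_I_finite)
  also have "\<dots> = (\<Prod>i\<in>II n. emeasure lborel {-1..(1::real)})"
    unfolding Rn_eq by (subst lbprod.emeasure_PiM) auto
  also have "\<dots> < \<infinity>" by (simp add: emeasure_lborel_Icc power_less_top_ennreal)
  finally show ?thesis .
qed

lemma nrm_sc2: "nrm n (sc (II n) 2 x) = nrm n x"
proof -
  have "sqnorm n (sc (II n) 2 x) = 4 * sqnorm n x"
    unfolding sqnorm_II sc_def by (simp add: sum_distrib_left power_mult_distrib)
  then show ?thesis
    unfolding nrm_def by (auto simp: sc_def II_def real_sqrt_mult fun_eq_iff)
qed

lemma sqnorm_sc2: "sqnorm n (sc (II n) 2 x) = 4 * sqnorm n x"
  unfolding sqnorm_II sc_def by (simp add: sum_distrib_left power_mult_distrib)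

locale orthctx =
  fixes n k l :: nat and Bs :: "(nat \<Rightarrow> nat) set" and c :: "(nat \<Rightarrow> nat) \<Rightarrow> complex" and b :: "nat \<Rightarrow> complex"
  assumes deg: "\<And>\<gamma>. \<gamma> \<in> Bs \<Longrightarrow> (\<Sum>i\<in>II n. \<gamma> i) = k"
    and harm: "\<And>x. (\<Sum>j\<in>II n. pol (II n) Bs (dco j (dco j c (\<lambda>\<gamma>. \<gamma>)) (dex j (\<lambda>\<gamma>. \<gamma>))) (dex j (dex j (\<lambda>\<gamma>. \<gamma>))) x) = 0"
    and iso: "(\<Sum>j\<in>II n. (b j)^2) = 0"
    and lk: "l \<noteq> k"
begin

definition "a = (\<lambda>\<gamma>. cnj (c \<gamma>))"
definition "P x = Ev (II n) b x ^ l"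
definition "dP j x = of_nat l * Ev (II n) b x ^ (l - 1) * b j"
definition "d2P j x = of_nat l * of_nat (l - 1) * Ev (II n) b x ^ (l - 2) * (b j)^2"
definition "Q = pol (II n) Bs a (\<lambda>\<gamma>. \<gamma>)"
definition "dQ j = pol (II n) Bs (dco j a (\<lambda>\<gamma>. \<gamma>)) (dex j (\<lambda>\<gamma>. \<gamma>))"
definition "d2Q j = pol (II n) Bs (dco j (dco j a (\<lambda>\<gamma>. \<gamma>)) (dex j (\<lambda>\<gamma>. \<gamma>))) (dex j (dex j (\<lambda>\<gamma>. \<gamma>)))"
definition "dd = l + k"
definition "V j x = (P x * dQ j x - Q x * dP j x) * complex_of_real (Wf dd (sqnorm n x))"
definition "U j x = (P x * d2Q j x - Q x * d2P j x) * complex_of_real (Wf dd (sqnorm n x))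
     + (P x * dQ j x - Q x * dP j x) * complex_of_real (2 * x j * Wd dd (sqnorm n x))"
definition "G x = Ev (II n) b (nrm n x) ^ l * cnj (pol (II n) Bs c (\<lambda>\<gamma>. \<gamma>) (nrm n x))"

lemma U_meas[measurable]: "U j \<in> borel_measurable (Rn n)"
  unfolding U_def P_def Q_def dP_def d2P_def dQ_def d2Q_def Rn_eq by measurable

lemma G_meas[measurable]: "G \<in> borel_measurable (Rn n)"
  unfolding G_def Rn_eq by measurable

lemma sumd2Q: "(\<Sum>j\<in>II n. d2Q j x) = 0"
proof -
  have "(\<Sum>j\<in>II n. d2Q j x) = cnj (\<Sum>j\<in>II n. pol (II n) Bs (dco j (dco j c (\<lambda>\<gamma>. \<gamma>)) (dex j (\<lambda>\<gamma>. \<gamma>))) (dex j (dex j (\<lambda>\<gamma>. \<gamma>))) x)"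
    unfolding d2Q_def a_def cnj_sum by (simp add: dco_cnj pol_cnj)
  then show ?thesis using harm by simp
qed

lemma sumd2P: "(\<Sum>j\<in>II n. d2P j x) = 0"
  unfolding d2P_def by (simp add: sum_distrib_left[symmetric] iso)

lemma eulerQ: "(\<Sum>j\<in>II n. complex_of_real (x j) * dQ j x) = of_nat k * Q x"
  unfolding dQ_def Q_def by (rule pol_euler) (use deg in auto)

lemma eulerP: "(\<Sum>j\<in>II n. complex_of_real (x j) * dP j x) = of_nat l * P x"
proof (cases l)
  case 0 then show ?thesis unfolding dP_def P_def by simp
next
  case (Suc m)
  have "(\<Sum>j\<in>II n. complex_of_real (x j) * dP j x) = (of_nat l * Ev (II n) b x ^ m) * (\<Sum>j\<in>II n. complex_of_real (x j) * b j)"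
    unfolding dP_def using Suc by (simp add: sum_distrib_left mult_ac)
  also have "\<dots> = of_nat l * P x"
    unfolding P_def Ev_def[symmetric] using Suc by simp
  finally show ?thesis .
qed

lemma sumU: "(\<Sum>j\<in>II n. U j x) = (of_nat k - of_nat l) * P x * Q x * complex_of_real (2 * Wd dd (sqnorm n x))"
proof -
  have "(\<Sum>j\<in>II n. U j x) =
     (P x * (\<Sum>j\<in>II n. d2Q j x) - Q x * (\<Sum>j\<in>II n. d2P j x)) * complex_of_real (Wf dd (sqnorm n x))
     + (P x * (\<Sum>j\<in>II n. complex_of_real (x j) * dQ j x) - Q x * (\<Sum>j\<in>II n. complex_of_real (x j) * dP j x)) * complex_of_real (2 * Wd dd (sqnorm n x))"
    unfolding U_def sum.distrib sum_distrib_left sum_distrib_right sum_subtractf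
    by (simp add: algebra_simps sum.distrib sum_subtractf sum_distrib_left sum_distrib_right)
  also have "\<dots> = (of_nat k - of_nat l) * P x * Q x * complex_of_real (2 * Wd dd (sqnorm n x))"
    unfolding sumd2Q sumd2P eulerQ eulerP by (simp add: algebra_simps)
  finally show ?thesis .
qed

lemma ball_bdd:
  assumes j: "j \<in> II n"
  shows "bdd_on {y. sqnorm n y \<le> 1} (U j)"
proof -
  let ?S = "{y. sqnorm n y \<le> 1}"
  have c1: "\<And>y i. y \<in> ?S \<Longrightarrow> i \<in> II n \<Longrightarrow> \<bar>y i\<bar> \<le> 1"
    using coord_le1 by (auto simp: II_def)
  have E: "bdd_on ?S (Ev (II n) b)"
    using Ev_bound c1 unfolding bdd_on_def by blast
  have pb: "bdd_on ?S (pol (II n) Bs a' e)" for a' e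
    using pol_bound c1 unfolding bdd_on_def by blast
  obtain BW where BW: "\<forall>s. \<bar>Wf dd s\<bar> \<le> BW" using Wf_bound by blast
  have W: "bdd_on ?S (\<lambda>y. complex_of_real (Wf dd (sqnorm n y)))"
    using BW by (intro bdd_on_real) auto
  have "\<bar>2 * y j * Wd dd (sqnorm n y)\<bar> \<le> 2 * 1 * ((1/4) powr (- (real dd / 2)) / 2)" if "y \<in> ?S" for y
    unfolding abs_mult using c1[OF that j] Wd_bound[of dd "sqnorm n y"]
    by (intro mult_mono) auto
  then have W2: "bdd_on ?S (\<lambda>y. complex_of_real (2 * y j * Wd dd (sqnorm n y)))"
    by (intro bdd_on_real) auto
  show ?thesis
    unfolding U_def P_def dP_def d2P_def Q_def dQ_def d2Q_def
    by (intro bdd_on_add bdd_on_mult bdd_on_diff bdd_on_power E pb W W2 bdd_on_const)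
qed

lemma U_zero: "sqnorm n y > 1 \<Longrightarrow> U j y = 0"
  unfolding U_def by (simp add: Wf_zero Wd_def)

lemma V_zero: "sqnorm n y > 1 \<Longrightarrow> V j y = 0"
  unfolding V_def by (simp add: Wf_zero)

lemma U_bound:
  assumes j: "j \<in> II n"
  shows "\<exists>B. \<forall>y. norm (U j y) \<le> B"
proof -
  obtain B where B: "\<forall>y\<in>{y. sqnorm n y \<le> 1}. norm (U j y) \<le> B"
    using ball_bdd[OF j] unfolding bdd_on_def by blast
  have "norm (U j y) \<le> max B 0" for y
    using B U_zero[of y j] by (cases "sqnorm n y \<le> 1") auto
  then show ?thesis by blast
qed

lemma U_integrable:
  assumes j: "j \<in> II n"
  shows "integrable (Rn n) (U j)"
proof -
  obtain B where B: "\<forall>y. norm (U j y) \<le> B" using U_bound[OF j] by blast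
  let ?A = "unit_ball_n n"
  have Asets: "?A \<in> sets (Rn n)"
    unfolding unit_ball_n_def Rn_eq by measurable
  have sub: "?A \<subseteq> Pi\<^sub>E (II n) (\<lambda>_. {-1..1})"
    using coord_le1 by (auto simp: unit_ball_n_def Rn_eq space_PiM PiE_def Pi_def II_def abs_le_iff)
  have "emeasure (Rn n) ?A \<le> emeasure (Rn n) (Pi\<^sub>E (II n) (\<lambda>_. {-1..1}))"
    by (intro emeasure_mono sub) (simp add: Rn_eq sets_PiM_I_finite)
  also have "\<dots> = (\<Prod>i\<in>II n. emeasure lborel {-1..(1::real)})"
    unfolding Rn_eq by (subst lbprod.emeasure_PiM) auto
  also have "\<dots> < \<infinity>" by (simp add: emeasure_lborel_Icc power_less_top_ennreal)
  finally have fin: "emeasure (Rn n) ?A < \<infinity>" .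
  show ?thesis
  proof (rule integrableI_bounded_set[OF Asets U_meas fin])
    show "AE x in Rn n. x \<in> ?A \<longrightarrow> norm (U j x) \<le> B" using B by auto
    show "AE x in Rn n. x \<notin> ?A \<longrightarrow> U j x = 0"
      by (intro AE_I2) (auto simp: unit_ball_n_def intro!: U_zero)
  qed
qed

lemma V_deriv:
  assumes j: "j \<in> II n" and t1: "sqnorm n (x(j:=t)) \<noteq> 1/4" and t2: "sqnorm n (x(j:=t)) \<noteq> 1"
  shows "((\<lambda>t. V j (x(j:=t))) has_vector_derivative U j (x(j:=t))) (at t)"
proof -
  have fI: "finite (II n)" by simp
  have dPx: "((\<lambda>t. P (x(j:=t))) has_vector_derivative dP j (x(j:=t))) (at t)"
    unfolding P_def dP_def by (rule Evpow_deriv[OF fI j])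
  have d2Px: "((\<lambda>t. dP j (x(j:=t))) has_vector_derivative d2P j (x(j:=t))) (at t)"
    unfolding dP_def d2P_def by (rule Evpow_deriv2[OF fI j])
  have dQx: "((\<lambda>t. Q (x(j:=t))) has_vector_derivative dQ j (x(j:=t))) (at t)"
    unfolding Q_def dQ_def by (rule pol_deriv[OF fI j])
  have d2Qx: "((\<lambda>t. dQ j (x(j:=t))) has_vector_derivative d2Q j (x(j:=t))) (at t)"
    unfolding dQ_def d2Q_def by (rule pol_deriv[OF fI j])
  define C where "C = (\<Sum>i\<in>II n - {j}. (x i)^2)"
  have sq: "\<And>s. sqnorm n (x(j:=s)) = s^2 + C" unfolding C_def by (rule sqnorm_upd[OF j])
  have "((\<lambda>s. Wf dd (s^2 + C)) has_real_derivative Wd dd (t^2 + C) * (2 * t)) (at t)"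
    by (rule DERIV_chain2[OF Wf_deriv]) (use t1 t2 sq in \<open>auto intro!: derivative_eq_intros\<close>)
  then have Wx: "((\<lambda>t. complex_of_real (Wf dd (sqnorm n (x(j:=t))))) has_vector_derivative
      complex_of_real (2 * t * Wd dd (sqnorm n (x(j:=t))))) (at t)"
    unfolding sq by (rule has_vector_derivative_of_real[THEN has_vector_derivative_eq_rhs]) (simp add: mult_ac)
  have "((\<lambda>t. (P (x(j:=t)) * dQ j (x(j:=t)) - Q (x(j:=t)) * dP j (x(j:=t))) * complex_of_real (Wf dd (sqnorm n (x(j:=t)))))
     has_vector_derivative
     (P (x(j:=t)) * dQ j (x(j:=t)) - Q (x(j:=t)) * dP j (x(j:=t))) * complex_of_real (2 * t * Wd dd (sqnorm n (x(j:=t))))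
     + ((P (x(j:=t)) * d2Q j (x(j:=t)) + dP j (x(j:=t)) * dQ j (x(j:=t))) - (Q (x(j:=t)) * d2P j (x(j:=t)) + dQ j (x(j:=t)) * dP j (x(j:=t))))
       * complex_of_real (Wf dd (sqnorm n (x(j:=t))))) (at t)"
    by (intro has_vector_derivative_mult has_vector_derivative_diff Wx dPx d2Px dQx d2Qx)
  then show ?thesis
    unfolding V_def U_def by (rule has_vector_derivative_eq_rhs) (simp add: algebra_simps)
qed

lemma U_int_zero:
  assumes j: "j \<in> II n"
  shows "integral\<^sup>L (Rn n) (U j) = 0"
  unfolding Rn_eq
proof (rule PiM_int_zero[where V="V j" and R=2])
  show "finite (II n)" "j \<in> II n" "(0::real) < 2" using j by auto
  show "integrable (PiM (II n) (\<lambda>_. lborel)) (U j)" using U_integrable[OF j] by (simp add: Rn_eq)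
  fix x :: "nat \<Rightarrow> real"
  define C where "C = (\<Sum>i\<in>II n - {j}. (x i)^2)"
  have sq: "\<And>s. sqnorm n (x(j:=s)) = s^2 + C" unfolding C_def by (rule sqnorm_upd[OF j])
  have C0: "C \<ge> 0" unfolding C_def by (intro sum_nonneg) auto
  let ?S = "{t. t^2 + C = 1/4} \<union> {t. t^2 + C = 1}"
  have Sfin: "finite ?S" using finite_sq_level[of C "1/4"] finite_sq_level[of C 1] by (simp only: finite_Un)
  have der: "\<forall>t. t \<notin> ?S \<longrightarrow> ((\<lambda>t. V j (x(j:=t))) has_vector_derivative U j (x(j:=t))) (at t)"
    using V_deriv[OF j] sq by auto
  have fI: "finite (II n)" by simp
  have c1: "continuous_on UNIV (\<lambda>t. P (x(j:=t)) * dQ j (x(j:=t)) - Q (x(j:=t)) * dP j (x(j:=t)))"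
  proof (intro continuous_at_imp_continuous_on ballI)
    fix t :: real
    have "((\<lambda>t. P (x(j:=t)) * dQ j (x(j:=t)) - Q (x(j:=t)) * dP j (x(j:=t))) has_vector_derivative
      ((P (x(j:=t)) * d2Q j (x(j:=t)) + dP j (x(j:=t)) * dQ j (x(j:=t))) - (Q (x(j:=t)) * d2P j (x(j:=t)) + dQ j (x(j:=t)) * dP j (x(j:=t))))) (at t)"
      unfolding P_def dP_def d2P_def Q_def dQ_def d2Q_def
      by (intro has_vector_derivative_mult has_vector_derivative_diff Evpow_deriv[OF fI j] Evpow_deriv2[OF fI j] pol_deriv[OF fI j])
    then show "isCont (\<lambda>t. P (x(j:=t)) * dQ j (x(j:=t)) - Q (x(j:=t)) * dP j (x(j:=t))) t"
      by (rule has_vector_derivative_continuous)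
  qed
  have c2: "continuous_on UNIV (\<lambda>t. complex_of_real (Wf dd (sqnorm n (x(j:=t)))))"
    unfolding sq by (intro continuous_on_of_real continuous_on_compose2[OF Wf_cont] continuous_intros) auto
  have cont: "continuous_on UNIV (\<lambda>t. V j (x(j:=t)))"
    unfolding V_def by (intro continuous_on_mult c1 c2)
  have supp: "\<forall>t. 2 \<le> \<bar>t\<bar> \<longrightarrow> V j (x(j:=t)) = 0 \<and> U j (x(j:=t)) = 0"
  proof (intro allI impI)
    fix t :: real assume "2 \<le> \<bar>t\<bar>"
    then have "4 \<le> t^2" by (metis abs_le_square_iff abs_numeral power2_eq_square real_sqrt_four real_sqrt_le_iff real_sqrt_mult_self)
    then have "sqnorm n (x(j:=t)) > 1" using sq C0 by simp
    then show "V j (x(j:=t)) = 0 \<and> U j (x(j:=t)) = 0" using U_zero V_zero by auto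
  qed
  obtain B where B: "\<forall>y. norm (U j y) \<le> B" using U_bound[OF j] by blast
  show "continuous_on UNIV (\<lambda>t. V j (x(j:=t))) \<and>
        (\<exists>S. finite S \<and> (\<forall>t. t \<notin> S \<longrightarrow> ((\<lambda>t. V j (x(j:=t))) has_vector_derivative U j (x(j:=t))) (at t))) \<and>
        (\<forall>t. \<bar>t\<bar> \<ge> 2 \<longrightarrow> V j (x(j:=t)) = 0 \<and> U j (x(j:=t)) = 0) \<and>
        (\<exists>B. \<forall>t. norm (U j (x(j:=t))) \<le> B)"
    using cont Sfin der supp B by blast
qed

lemma G_shell:
  assumes s1: "1/4 < sqnorm n x" and s2: "sqnorm n x \<le> 1"
  shows "P x * Q x * complex_of_real (2 * Wd dd (sqnorm n x)) = G x"
proof -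
  define r where "r = sqrt (sqnorm n x)"
  have r: "r > 0" using s1 by (simp add: r_def)
  have nx: "nrm n x = restrict (\<lambda>i. x i / r) (II n)"
    by (simp add: nrm_def r_def II_def)
  have "2 * Wd dd (sqnorm n x) = sqnorm n x powr (- (real dd / 2))"
    using s1 s2 by (simp add: Wd_def)
  also have "\<dots> = inverse (r ^ dd)"
  proof -
    have "r ^ dd = r powr real dd" using r by (simp add: powr_realpow)
    also have "\<dots> = sqnorm n x powr (real dd / 2)"
      unfolding r_def using s1 by (simp add: powr_half_sqrt[symmetric] powr_powr)
    finally show ?thesis by (simp add: powr_minus)
  qed
  finally have w: "complex_of_real (2 * Wd dd (sqnorm n x)) = inverse (of_real r ^ dd)" by simp
  have G: "G x = (Ev (II n) b x / of_real r) ^ l * (Q x / of_real r ^ k)"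
    unfolding G_def nx Ev_restrict pol_restrict Ev_scale
    by (subst pol_scale[where k=k]) (use deg in \<open>auto simp: Q_def a_def pol_cnj\<close>)
  show ?thesis
    unfolding w G P_def using r by (simp add: field_simps power_add dd_def)
qed

lemma sumU_shell:
  "(\<Sum>j\<in>II n. U j x) = (of_nat k - of_nat l) * (indicator {y. 1/4 < sqnorm n y \<and> sqnorm n y \<le> 1} x *\<^sub>R G x)"
proof (cases "1/4 < sqnorm n x \<and> sqnorm n x \<le> 1")
  case True
  then show ?thesis unfolding sumU using G_shell[of x] by (simp add: mult.assoc)
next
  case False
  then show ?thesis unfolding sumU by (auto simp: Wd_def)
qed

lemma G_bound: "norm (G x) \<le> (\<Sum>i\<in>II n. norm (b i)) ^ l * (\<Sum>\<gamma>\<in>Bs. norm (c \<gamma>))"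
proof -
  have c1: "\<And>i. i \<in> II n \<Longrightarrow> \<bar>nrm n x i\<bar> \<le> 1" using nrm_coord_le1 by (auto simp: II_def)
  show ?thesis
    unfolding G_def norm_mult norm_power complex_mod_cnj
    by (intro mult_mono power_mono Ev_bound pol_bound c1) (auto intro!: sum_nonneg zero_le_power)
qed

lemma G_int: "integrable (Rn n) (\<lambda>x. indicator (unit_ball_n n) x *\<^sub>R G x)"
  by (rule integrableI_bounded_set_indicator[OF ball_sets G_meas ball_fin, where B="(\<Sum>i\<in>II n. norm (b i)) ^ l * (\<Sum>\<gamma>\<in>Bs. norm (c \<gamma>))"]) (intro AE_I2 impI G_bound)

lemma G_int4: "integrable (Rn n) (\<lambda>x. indicator {y\<in>space (Rn n). sqnorm n y \<le> 1/4} x *\<^sub>R G x)"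
proof (rule integrableI_bounded_set_indicator[OF _ G_meas _ AE_I2[OF impI[OF G_bound]]])
  show "{y\<in>space (Rn n). sqnorm n y \<le> 1/4} \<in> sets (Rn n)" unfolding Rn_eq by measurable
  have "emeasure (Rn n) {y\<in>space (Rn n). sqnorm n y \<le> 1/4} \<le> emeasure (Rn n) (unit_ball_n n)"
    by (intro emeasure_mono ball_sets) (auto simp: unit_ball_n_def)
  then show "emeasure (Rn n) {y\<in>space (Rn n). sqnorm n y \<le> 1/4} < \<infinity>" using ball_fin by (simp add: le_less_trans)
qed

lemma orth_main: "integral\<^sup>L (Rn n) (\<lambda>x. indicator (unit_ball_n n) x *\<^sub>R G x) = 0"
proof -
  let ?sh = "{y. 1/4 < sqnorm n y \<and> sqnorm n y \<le> 1}"
  let ?b4 = "{y\<in>space (Rn n). sqnorm n y \<le> 1/4}"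
  have "integral\<^sup>L (Rn n) (\<lambda>x. \<Sum>j\<in>II n. U j x) = (\<Sum>j\<in>II n. integral\<^sup>L (Rn n) (U j))"
    by (rule Bochner_Integration.integral_sum) (use U_integrable in auto)
  also have "\<dots> = 0" using U_int_zero by simp
  finally have "integral\<^sup>L (Rn n) (\<lambda>x. (of_nat k - of_nat l) * (indicator ?sh x *\<^sub>R G x)) = 0"
    unfolding sumU_shell .
  then have "(of_nat k - of_nat l) * integral\<^sup>L (Rn n) (\<lambda>x. indicator ?sh x *\<^sub>R G x) = 0"
    by (simp only: integral_mult_right_zero)
  moreover have "(of_nat k - of_nat l :: complex) \<noteq> 0" using lk by simp
  ultimately have sh0: "integral\<^sup>L (Rn n) (\<lambda>x. indicator ?sh x *\<^sub>R G x) = 0" by simp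
  have "integral\<^sup>L (Rn n) (\<lambda>x. indicator ?sh x *\<^sub>R G x)
      = integral\<^sup>L (Rn n) (\<lambda>x. indicator (unit_ball_n n) x *\<^sub>R G x - indicator ?b4 x *\<^sub>R G x)"
    by (intro Bochner_Integration.integral_cong refl) (auto simp: indicator_def unit_ball_n_def)
  also have "\<dots> = integral\<^sup>L (Rn n) (\<lambda>x. indicator (unit_ball_n n) x *\<^sub>R G x) - integral\<^sup>L (Rn n) (\<lambda>x. indicator ?b4 x *\<^sub>R G x)"
    by (rule Bochner_Integration.integral_diff[OF G_int G_int4])
  finally have e1: "integral\<^sup>L (Rn n) (\<lambda>x. indicator (unit_ball_n n) x *\<^sub>R G x) = integral\<^sup>L (Rn n) (\<lambda>x. indicator ?b4 x *\<^sub>R G x)"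
    using sh0 by simp
  have "integral\<^sup>L (Rn n) (\<lambda>x. indicator ?b4 x *\<^sub>R G x)
      = integral\<^sup>L (Rn n) (\<lambda>x. (\<lambda>x. indicator (unit_ball_n n) x *\<^sub>R G x) (sc (II n) 2 x))"
  proof (intro Bochner_Integration.integral_cong refl)
    fix x assume x: "x \<in> space (Rn n)"
    have "sc (II n) 2 x \<in> space (PiM (II n) (\<lambda>_. lborel :: real measure))"
      by (simp add: sc_def space_PiM)
    then have "sc (II n) 2 x \<in> space (Rn n)" by (simp add: Rn_eq)
    then show "indicator ?b4 x *\<^sub>R G x = indicator (unit_ball_n n) (sc (II n) 2 x) *\<^sub>R G (sc (II n) 2 x)"
      using x by (auto simp: G_def nrm_sc2 sqnorm_sc2 unit_ball_n_def indicator_def Rn_eq space_PiM)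
  qed
  also have "\<dots> = integral\<^sup>L (Rn n) (\<lambda>x. indicator (unit_ball_n n) x *\<^sub>R G x) / 2 ^ card (II n)"
  proof -
    have m: "(\<lambda>x. indicator (unit_ball_n n) x *\<^sub>R G x) \<in> borel_measurable (Rn n)" by measurable
    show ?thesis
      using integral_sc[of "II n" 2 "\<lambda>x. indicator (unit_ball_n n) x *\<^sub>R G x"] m by (simp add: Rn_eq)
  qed
  finally have e2: "integral\<^sup>L (Rn n) (\<lambda>x. indicator (unit_ball_n n) x *\<^sub>R G x)
      = integral\<^sup>L (Rn n) (\<lambda>x. indicator (unit_ball_n n) x *\<^sub>R G x) / 2 ^ card (II n)"
    using e1 by simp
  have "card (II n) \<ge> 1" by (simp add: II_def)
  then have "(2::complex) ^ card (II n) \<noteq> 1"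
    by (metis One_nat_def le_iff_add numeral_One one_less_numeral_iff power_0 power_inject_exp semiring_norm(76) of_nat_numeral of_nat_power of_nat_eq_1_iff zero_neq_one add_is_0 numeral_2_eq_2)
  with e2 show ?thesis by (auto simp: field_simps)
qed

end

lemma pol_deriv_shift:
  assumes "finite I" "j \<in> I"
  shows "((\<lambda>t. pol I Bs a e (x(j := x j + t))) has_vector_derivative pol I Bs (dco j a e) (dex j e) (x(j := x j + s))) (at s)"
proof -
  have "((\<lambda>t. x j + t) has_vector_derivative 1) (at s)"
    by (auto intro!: derivative_eq_intros simp: has_real_derivative_iff_has_vector_derivative[symmetric])
  from vector_diff_chain_at[OF this pol_deriv[OF assms, of Bs a e x "x j + s"]]
  show ?thesis by (simp add: o_def)
qed

lemma sec_partial_pol: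
  assumes "finite I" "j \<in> I"
  shows "sec_partial (pol I Bs a e) j x = pol I Bs (dco j (dco j a e) (dex j e)) (dex j (dex j e)) x"
proof -
  have "(\<lambda>s. vector_derivative (\<lambda>t. pol I Bs a e (x(j := x j + t))) (at s))
      = (\<lambda>s. pol I Bs (dco j a e) (dex j e) (x(j := x j + s)))"
    by (intro ext vector_derivative_at pol_deriv_shift[OF assms])
  moreover have "vector_derivative (\<lambda>s. pol I Bs (dco j a e) (dex j e) (x(j := x j + s))) (at 0)
      = pol I Bs (dco j (dco j a e) (dex j e)) (dex j (dex j e)) (x(j := x j + 0))"
    by (intro vector_derivative_at pol_deriv_shift[OF assms])
  ultimately show ?thesis unfolding sec_partial_def by simp
qed

lemma harm_extract:
  assumes "sph_harm n k Y"
  obtains Bs c where "\<And>y. y \<in> Sph n \<Longrightarrow> Y y = pol (II n) Bs c (\<lambda>\<gamma>. \<gamma>) y"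
    and "\<And>\<gamma>. \<gamma> \<in> Bs \<Longrightarrow> (\<Sum>i\<in>II n. \<gamma> i) = k"
    and "\<And>x. (\<Sum>j\<in>II n. pol (II n) Bs (dco j (dco j c (\<lambda>\<gamma>. \<gamma>)) (dex j (\<lambda>\<gamma>. \<gamma>))) (dex j (dex j (\<lambda>\<gamma>. \<gamma>))) x) = 0"
proof -
  from assms obtain P c Bs where Y: "\<forall>x\<in>Sph n. Y x = P x"
    and deg: "\<forall>\<beta>\<in>Bs. (\<Sum>j=1..n+1. \<beta> j) = k"
    and Peq: "\<forall>x. P x = (\<Sum>\<beta>\<in>Bs. c \<beta> * (\<Prod>j=1..n+1. (complex_of_real (x j)) ^ (\<beta> j)))"
    and harm: "\<forall>x. (\<Sum>j=1..n+1. sec_partial P j x) = 0"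
    unfolding sph_harm_def hom_harm_poly_def by blast
  have P: "P = pol (II n) Bs c (\<lambda>\<gamma>. \<gamma>)"
    using Peq by (auto simp: fun_eq_iff pol_def mnm_def II_def)
  show ?thesis
  proof
    show "\<And>y. y \<in> Sph n \<Longrightarrow> Y y = pol (II n) Bs c (\<lambda>\<gamma>. \<gamma>) y" using Y P by auto
    show "\<And>\<gamma>. \<gamma> \<in> Bs \<Longrightarrow> (\<Sum>i\<in>II n. \<gamma> i) = k" using deg by (auto simp: II_def)
    fix x
    have "(\<Sum>j\<in>II n. pol (II n) Bs (dco j (dco j c (\<lambda>\<gamma>. \<gamma>)) (dex j (\<lambda>\<gamma>. \<gamma>))) (dex j (dex j (\<lambda>\<gamma>. \<gamma>))) x)
        = (\<Sum>j\<in>II n. sec_partial P j x)"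
      unfolding P by (intro sum.cong refl sec_partial_pol[symmetric]) auto
    then show "(\<Sum>j\<in>II n. pol (II n) Bs (dco j (dco j c (\<lambda>\<gamma>. \<gamma>)) (dex j (\<lambda>\<gamma>. \<gamma>))) (dex j (dex j (\<lambda>\<gamma>. \<gamma>))) x) = 0"
      using harm by (simp add: II_def)
  qed
qed

lemma nrm_Sph:
  assumes "sqnorm n x \<noteq> 0"
  shows "nrm n x \<in> Sph n"
proof -
  have pos: "sqnorm n x > 0" using assms sqnorm_nonneg[of n x] by simp
  have "sqnorm n (nrm n x) = (\<Sum>j=1..n+1. (x j / sqrt (sqnorm n x))^2)"
    unfolding sqnorm_def[of n "nrm n x"] by (intro sum.cong) (auto simp: nrm_def)
  also have "\<dots> = (\<Sum>j=1..n+1. (x j)^2) / sqnorm n x"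
    using pos by (simp only: power_divide real_sqrt_pow2 less_imp_le sum_divide_distrib)
  also have "\<dots> = 1" using pos by (simp add: sqnorm_def)
  finally show ?thesis unfolding Sph_def by (auto simp: nrm_def)
qed

lemma nrm_zero:
  assumes "sqnorm n x = 0"
  shows "nrm n x = restrict (\<lambda>_. 0) {1..n+1}"
  using assms by (auto simp: nrm_def fun_eq_iff)

lemma AE_nonzero: "AE x in Rn n. sqnorm n x \<noteq> 0"
proof (rule AE_I')
  show "Pi\<^sub>E (II n) (\<lambda>_. {0}) \<in> null_sets (Rn n)"
  proof -
    have "emeasure (Rn n) (Pi\<^sub>E (II n) (\<lambda>_. {0})) = (\<Prod>i\<in>II n. emeasure lborel {0::real})"
      unfolding Rn_eq by (subst lbprod.emeasure_PiM) auto
    also have "\<dots> = 0" by (simp add: II_def)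
    finally have e: "emeasure (Rn n) (Pi\<^sub>E (II n) (\<lambda>_. {0})) = 0" .
    have "Pi\<^sub>E (II n) (\<lambda>_. {0::real}) \<in> sets (Rn n)"
      unfolding Rn_eq by (rule sets_PiM_I_finite) auto
    with e show ?thesis by (rule null_setsI)
  qed
  show "{x \<in> space (Rn n). \<not> sqnorm n x \<noteq> 0} \<subseteq> Pi\<^sub>E (II n) (\<lambda>_. {0})"
  proof
    fix x assume x: "x \<in> {x \<in> space (Rn n). \<not> sqnorm n x \<noteq> 0}"
    then have "(x i)^2 = 0" if "i \<in> II n" for i
      using coord_le_sqnorm[OF that, of x] by (metis (mono_tags) mem_Collect_eq power2_less_eq_zero_iff order.antisym zero_le_power2)
    then show "x \<in> Pi\<^sub>E (II n) (\<lambda>_. {0})" using x by (auto simp: Rn_eq space_PiM PiE_def extensional_def fun_eq_iff)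
  qed
qed

lemma Ynrm_meas:
  assumes Yeq: "\<And>y. y \<in> Sph n \<Longrightarrow> Y y = Pp y" and Pm: "Pp \<in> borel_measurable (Rn n)"
  shows "(\<lambda>x. Y (nrm n x)) \<in> borel_measurable (Rn n)"
proof -
  have m: "(\<lambda>x. if sqnorm n x = 0 then Y (restrict (\<lambda>_. 0) {1..n+1}) else Pp (nrm n x)) \<in> borel_measurable (Rn n)"
    using Pm unfolding Rn_eq by measurable
  show ?thesis
    by (rule measurable_cong[THEN iffD1, OF _ m]) (auto simp: nrm_zero Yeq nrm_Sph)
qed

lemma sph_int_Y:
  assumes Yeq: "\<And>y. y \<in> Sph n \<Longrightarrow> Y y = Pp y" and Pm[measurable]: "Pp \<in> borel_measurable (Rn n)"
    and gm[measurable]: "(\<lambda>x. g (nrm n x)) \<in> borel_measurable (Rn n)"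
  shows "sph_int n (\<lambda>y. g y * cnj (Y y)) = sph_int n (\<lambda>y. g y * cnj (Pp y))"
proof -
  have [measurable]: "(\<lambda>x. Y (nrm n x)) \<in> borel_measurable (Rn n)" by (rule Ynrm_meas[OF Yeq Pm])
  have "integral\<^sup>L (Rn n) (\<lambda>x. indicator (unit_ball_n n) x *\<^sub>R (g (nrm n x) * cnj (Y (nrm n x))))
      = integral\<^sup>L (Rn n) (\<lambda>x. indicator (unit_ball_n n) x *\<^sub>R (g (nrm n x) * cnj (Pp (nrm n x))))"
  proof (rule integral_cong_AE)
    show "(\<lambda>x. indicator (unit_ball_n n) x *\<^sub>R (g (nrm n x) * cnj (Y (nrm n x)))) \<in> borel_measurable (Rn n)"
      by measurable
    have "(\<lambda>x. Pp (nrm n x)) \<in> borel_measurable (Rn n)"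
      using measurable_comp[OF nrm_meas Pm[unfolded Rn_eq]] by (simp add: Rn_eq o_def)
    then show "(\<lambda>x. indicator (unit_ball_n n) x *\<^sub>R (g (nrm n x) * cnj (Pp (nrm n x)))) \<in> borel_measurable (Rn n)"
      by measurable
    show "AE x in Rn n. indicator (unit_ball_n n) x *\<^sub>R (g (nrm n x) * cnj (Y (nrm n x))) =
        indicator (unit_ball_n n) x *\<^sub>R (g (nrm n x) * cnj (Pp (nrm n x)))"
      using AE_nonzero by eventually_elim (simp add: Yeq nrm_Sph)
  qed
  then show ?thesis unfolding sph_int_def by simp
qed

definition "isoc n b \<longleftrightarrow> (\<Sum>j\<in>II n. (b j)^2) = (0::complex)"
definition "summc (a :: nat \<Rightarrow> complex) \<longleftrightarrow> (\<forall>R. summable (\<lambda>l. norm (a l) * R ^ l))"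

lemma orth_Y:
  assumes Y: "sph_harm n k Y" and iso: "isoc n b" and lk: "l \<noteq> k"
  shows "sph_int n (\<lambda>y. Ev (II n) b y ^ l * cnj (Y y)) = 0"
proof -
  obtain Bs c where Yeq: "\<And>y. y \<in> Sph n \<Longrightarrow> Y y = pol (II n) Bs c (\<lambda>\<gamma>. \<gamma>) y"
    and deg: "\<And>\<gamma>. \<gamma> \<in> Bs \<Longrightarrow> (\<Sum>i\<in>II n. \<gamma> i) = k"
    and harm: "\<And>x. (\<Sum>j\<in>II n. pol (II n) Bs (dco j (dco j c (\<lambda>\<gamma>. \<gamma>)) (dex j (\<lambda>\<gamma>. \<gamma>))) (dex j (dex j (\<lambda>\<gamma>. \<gamma>))) x) = 0"
    by (rule harm_extract[OF Y], rule that)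
  interpret orthctx n k l Bs c b
    by unfold_locales (use deg harm iso lk in \<open>auto simp: isoc_def\<close>)
  have pm: "pol (II n) Bs c (\<lambda>\<gamma>. \<gamma>) \<in> borel_measurable (Rn n)" unfolding Rn_eq by measurable
  have gm: "(\<lambda>x. Ev (II n) b (nrm n x) ^ l) \<in> borel_measurable (Rn n)" unfolding Rn_eq by measurable
  have "sph_int n (\<lambda>y. Ev (II n) b y ^ l * cnj (Y y)) = sph_int n (\<lambda>y. Ev (II n) b y ^ l * cnj (pol (II n) Bs c (\<lambda>\<gamma>. \<gamma>) y))"
    by (rule sph_int_Y[OF Yeq pm gm])
  also have "\<dots> = 0"
  proof -
    have "integral\<^sup>L (Rn n) (\<lambda>x. indicator (unit_ball_n n) x *\<^sub>R (Ev (II n) b (nrm n x) ^ l * cnj (pol (II n) Bs c (\<lambda>\<gamma>. \<gamma>) (nrm n x)))) = 0"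
      using orth_main unfolding G_def .
    then show ?thesis unfolding sph_int_def by (simp only: mult_zero_right)
  qed
  finally show ?thesis .
qed

lemma powser_cont:
  assumes "summc a"
  shows "continuous_on UNIV (\<lambda>w. \<Sum>l. a l * w ^ l)"
proof (intro continuous_at_imp_continuous_on ballI)
  fix w :: complex
  have "summable (\<lambda>l. norm (a l * of_real (norm w + 1) ^ l))"
    using assms unfolding summc_def by (simp add: norm_mult norm_power)
  then have "summable (\<lambda>l. a l * of_real (norm w + 1) ^ l)" by (rule summable_norm_cancel)
  then show "isCont (\<lambda>w. \<Sum>l. a l * w ^ l) w"
    by (rule isCont_powser) simp
qed

lemma powser_bound:
  assumes "summc a" and "norm w \<le> R"
  shows "norm (\<Sum>l. a l * w ^ l) \<le> (\<Sum>l. norm (a l) * R ^ l)"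
proof -
  have s: "summable (\<lambda>l. norm (a l) * R ^ l)" using assms unfolding summc_def by blast
  have le: "norm (a l * w ^ l) \<le> norm (a l) * R ^ l" for l
    unfolding norm_mult norm_power
    by (rule mult_left_mono[OF power_mono[OF assms(2) norm_ge_zero] norm_ge_zero])
  have s2: "summable (\<lambda>l. norm (a l * w ^ l))"
    by (rule summable_comparison_test'[OF s, where N=0]) (simp only: norm_ge_zero abs_of_nonneg real_norm_def le)
  have "norm (\<Sum>l. a l * w ^ l) \<le> (\<Sum>l. norm (a l * w ^ l))" by (rule summable_norm[OF s2])
  also have "\<dots> \<le> (\<Sum>l. norm (a l) * R ^ l)" by (rule suminf_le[OF le s2 s])
  finally show ?thesis .
qed

lemma powser_meas:
  assumes "summc a"
  shows "(\<lambda>x. \<Sum>l. a l * Ev (II n) b (nrm n x) ^ l) \<in> borel_measurable (Rn n)"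
proof -
  have "(\<lambda>w. \<Sum>l. a l * w ^ l) \<in> borel_measurable borel"
    by (rule borel_measurable_continuous_onI[OF powser_cont[OF assms]])
  moreover have "(\<lambda>x. Ev (II n) b (nrm n x)) \<in> borel_measurable (Rn n)" unfolding Rn_eq by measurable
  ultimately show ?thesis by (rule measurable_compose[rotated])
qed

lemma Ev_nrm_bound: "norm (Ev (II n) b (nrm n x)) \<le> (\<Sum>i\<in>II n. norm (b i))"
proof (rule Ev_bound)
  fix i assume "i \<in> II n" then show "\<bar>nrm n x i\<bar> \<le> 1" by (rule nrm_coord_le1[unfolded II_def[symmetric]])
qed

lemma series_inner:
  assumes Y: "sph_harm n k Y" and iso: "isoc n b" and sa: "summc a"
  shows "sph_int n (\<lambda>y. (\<Sum>l. a l * Ev (II n) b y ^ l) * cnj (Y y)) = a k * sph_int n (\<lambda>y. Ev (II n) b y ^ k * cnj (Y y))"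
proof -
  obtain Bs c where Yeq: "\<And>y. y \<in> Sph n \<Longrightarrow> Y y = pol (II n) Bs c (\<lambda>\<gamma>. \<gamma>) y"
    and "\<And>\<gamma>. \<gamma> \<in> Bs \<Longrightarrow> (\<Sum>i\<in>II n. \<gamma> i) = k"
    and "\<And>x. (\<Sum>j\<in>II n. pol (II n) Bs (dco j (dco j c (\<lambda>\<gamma>. \<gamma>)) (dex j (\<lambda>\<gamma>. \<gamma>))) (dex j (dex j (\<lambda>\<gamma>. \<gamma>))) x) = 0"
    by (rule harm_extract[OF Y], rule that)
  let ?Pp = "pol (II n) Bs c (\<lambda>\<gamma>. \<gamma>)"
  have pm[measurable]: "?Pp \<in> borel_measurable (Rn n)" unfolding Rn_eq by measurable
  have pnm[measurable]: "(\<lambda>x. ?Pp (nrm n x)) \<in> borel_measurable (Rn n)" unfolding Rn_eq by measurable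
  have enm[measurable]: "(\<lambda>x. Ev (II n) b (nrm n x)) \<in> borel_measurable (Rn n)" unfolding Rn_eq by measurable
  have gm: "(\<lambda>x. \<Sum>l. a l * Ev (II n) b (nrm n x) ^ l) \<in> borel_measurable (Rn n)" by (rule powser_meas[OF sa])
  have gkm: "(\<lambda>x. Ev (II n) b (nrm n x) ^ k) \<in> borel_measurable (Rn n)" by measurable
  define BE where "BE = (\<Sum>i\<in>II n. norm (b i))"
  define BP where "BP = (\<Sum>\<gamma>\<in>Bs. norm (c \<gamma>))"
  have BP0: "BP \<ge> 0" unfolding BP_def by (intro sum_nonneg) auto
  have Eb: "norm (Ev (II n) b (nrm n x)) \<le> BE" for x unfolding BE_def by (rule Ev_nrm_bound)
  have Pb: "norm (?Pp (nrm n x)) \<le> BP" for x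
    unfolding BP_def
  proof (rule pol_bound)
    fix i assume "i \<in> II n" then show "\<bar>nrm n x i\<bar> \<le> 1" by (rule nrm_coord_le1[unfolded II_def[symmetric]])
  qed
  have BE0: "BE \<ge> 0" unfolding BE_def by (intro sum_nonneg) auto
  define f where "f l x = indicator (unit_ball_n n) x *\<^sub>R (a l * Ev (II n) b (nrm n x) ^ l * cnj (?Pp (nrm n x)))" for l x
  define m where "m l = norm (a l) * BE ^ l * BP" for l
  have sm: "summable m" unfolding m_def using sa unfolding summc_def by (intro summable_mult2) (rule spec)
  have fb0: "norm (a l * Ev (II n) b (nrm n x) ^ l * cnj (?Pp (nrm n x))) \<le> m l" for l x
      unfolding m_def norm_mult norm_power complex_mod_cnj
      by (rule mult_mono[OF mult_left_mono[OF power_mono[OF Eb norm_ge_zero] norm_ge_zero] Pb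
          mult_nonneg_nonneg[OF norm_ge_zero zero_le_power[OF BE0]] norm_ge_zero])
  have fb: "norm (f l x) \<le> m l" for l x
  proof -
    have "norm (a l * Ev (II n) b (nrm n x) ^ l * cnj (?Pp (nrm n x))) \<le> m l"
      unfolding m_def norm_mult norm_power complex_mod_cnj
      by (rule mult_mono[OF mult_left_mono[OF power_mono[OF Eb norm_ge_zero] norm_ge_zero] Pb
          mult_nonneg_nonneg[OF norm_ge_zero zero_le_power[OF BE0]] norm_ge_zero])
    moreover have "norm (f l x) \<le> norm (a l * Ev (II n) b (nrm n x) ^ l * cnj (?Pp (nrm n x)))"
      unfolding f_def by (auto simp: indicator_def)
    ultimately show ?thesis by linarith
  qed
  have fm[measurable]: "f l \<in> borel_measurable (Rn n)" for l unfolding f_def by measurable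
  have fint: "integrable (Rn n) (f l)" for l
  proof -
    have "integrable (Rn n) (\<lambda>x. indicator (unit_ball_n n) x *\<^sub>R (a l * Ev (II n) b (nrm n x) ^ l * cnj (?Pp (nrm n x))))"
      by (rule integrableI_bounded_set_indicator[OF ball_sets _ ball_fin, where B="m l"])
        (measurable, intro AE_I2 impI fb0)
    then show ?thesis unfolding f_def .
  qed
  have int_norm_le: "integral\<^sup>L (Rn n) (\<lambda>x. norm (f l x)) \<le> m l * measure (Rn n) (unit_ball_n n)" for l
  proof -
    have "integral\<^sup>L (Rn n) (\<lambda>x. norm (f l x)) \<le> integral\<^sup>L (Rn n) (\<lambda>x. m l * indicator (unit_ball_n n) x)"
    proof (rule integral_mono)
      show "integrable (Rn n) (\<lambda>x. norm (f l x))" using fint by auto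
      show "integrable (Rn n) (\<lambda>x. m l * indicator (unit_ball_n n) x)"
        using ball_fin by (intro integrable_mult_right integrable_real_indicator ball_sets) auto
      fix x show "norm (f l x) \<le> m l * indicator (unit_ball_n n) x"
        using fb[of l x] by (auto simp: f_def indicator_def)
    qed
    then show ?thesis by simp
  qed
  have sumint: "summable (\<lambda>l. integral\<^sup>L (Rn n) (\<lambda>x. norm (f l x)))"
  proof (rule summable_comparison_test'[OF summable_mult2[OF sm], where N=0])
    fix l :: nat
    have "integral\<^sup>L (Rn n) (\<lambda>x. norm (f l x)) \<ge> 0" by (rule integral_nonneg_AE) simp
    then show "norm (integral\<^sup>L (Rn n) (\<lambda>x. norm (f l x))) \<le> m l * measure (Rn n) (unit_ball_n n)"
      using int_norm_le[of l] by simp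
  qed
  have ae: "AE x in Rn n. summable (\<lambda>l. norm (f l x))"
  proof (rule AE_I2)
    fix x show "summable (\<lambda>l. norm (f l x))"
      by (rule summable_comparison_test'[OF sm, where N=0]) (simp only: norm_ge_zero abs_of_nonneg real_norm_def fb)
  qed
  have pt: "indicator (unit_ball_n n) x *\<^sub>R ((\<Sum>l. a l * Ev (II n) b (nrm n x) ^ l) * cnj (?Pp (nrm n x))) = (\<Sum>l. f l x)" for x
  proof -
    have s1: "summable (\<lambda>l. a l * Ev (II n) b (nrm n x) ^ l)"
    proof (rule summable_norm_cancel, rule summable_comparison_test'[OF sa[unfolded summc_def, rule_format, of BE], where N=0])
      fix l :: nat
      show "norm (norm (a l * Ev (II n) b (nrm n x) ^ l)) \<le> norm (a l) * BE ^ l"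
        unfolding norm_mult norm_power real_norm_def abs_mult abs_norm_cancel power_abs
        by (rule mult_left_mono[OF power_mono[OF Eb norm_ge_zero] norm_ge_zero])
    qed
    have "(\<Sum>l. a l * Ev (II n) b (nrm n x) ^ l) * cnj (?Pp (nrm n x)) = (\<Sum>l. a l * Ev (II n) b (nrm n x) ^ l * cnj (?Pp (nrm n x)))"
      by (rule suminf_mult2[OF s1])
    then show ?thesis unfolding f_def by (auto simp: indicator_def)
  qed
  have "integral\<^sup>L (Rn n) (\<lambda>x. indicator (unit_ball_n n) x *\<^sub>R ((\<Sum>l. a l * Ev (II n) b (nrm n x) ^ l) * cnj (?Pp (nrm n x))))
      = integral\<^sup>L (Rn n) (\<lambda>x. \<Sum>l. f l x)" unfolding pt ..
  also have "\<dots> = (\<Sum>l. integral\<^sup>L (Rn n) (f l))"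
    by (rule integral_suminf[OF fint ae sumint])
  also have "\<dots> = integral\<^sup>L (Rn n) (f k)"
  proof -
    have fl: "integral\<^sup>L (Rn n) (f l) = a l * integral\<^sup>L (Rn n) (\<lambda>x. indicator (unit_ball_n n) x *\<^sub>R (Ev (II n) b (nrm n x) ^ l * cnj (?Pp (nrm n x))))" for l
    proof -
      have "f l = (\<lambda>x. a l * (indicator (unit_ball_n n) x *\<^sub>R (Ev (II n) b (nrm n x) ^ l * cnj (?Pp (nrm n x)))))"
        unfolding f_def by (auto simp: fun_eq_iff indicator_def)
      then show ?thesis by (simp only: integral_mult_right_zero)
    qed
    have z: "integral\<^sup>L (Rn n) (f l) = 0" if "l \<noteq> k" for l
    proof -
      have "sph_int n (\<lambda>y. Ev (II n) b y ^ l * cnj (Y y)) = 0" by (rule orth_Y[OF Y iso that])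
      moreover have "sph_int n (\<lambda>y. Ev (II n) b y ^ l * cnj (Y y)) = sph_int n (\<lambda>y. Ev (II n) b y ^ l * cnj (?Pp y))"
        by (rule sph_int_Y[OF Yeq pm]) (unfold Rn_eq, measurable)
      moreover have "1 + complex_of_nat n \<noteq> 0"
        using of_nat_neq_0[of n, where 'a=complex] unfolding of_nat_Suc by blast
      ultimately show ?thesis unfolding fl sph_int_def by simp
    qed
    have "(\<lambda>l. integral\<^sup>L (Rn n) (f l)) = (\<lambda>l. if l = k then integral\<^sup>L (Rn n) (f k) else 0)"
      using z by auto
    then show ?thesis using sums_single[of k "\<lambda>_. integral\<^sup>L (Rn n) (f k)"] by (simp add: sums_iff)
  qed
  finally have main: "integral\<^sup>L (Rn n) (\<lambda>x. indicator (unit_ball_n n) x *\<^sub>R ((\<Sum>l. a l * Ev (II n) b (nrm n x) ^ l) * cnj (?Pp (nrm n x))))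
      = a k * integral\<^sup>L (Rn n) (\<lambda>x. indicator (unit_ball_n n) x *\<^sub>R (Ev (II n) b (nrm n x) ^ k * cnj (?Pp (nrm n x))))"
  proof -
    have "f k = (\<lambda>x. a k * (indicator (unit_ball_n n) x *\<^sub>R (Ev (II n) b (nrm n x) ^ k * cnj (?Pp (nrm n x)))))"
      unfolding f_def by (auto simp: fun_eq_iff indicator_def)
    then have "integral\<^sup>L (Rn n) (f k) = a k * integral\<^sup>L (Rn n) (\<lambda>x. indicator (unit_ball_n n) x *\<^sub>R (Ev (II n) b (nrm n x) ^ k * cnj (?Pp (nrm n x))))"
      by (simp only: integral_mult_right_zero)
    moreover assume "integral\<^sup>L (Rn n) (\<lambda>x. indicator (unit_ball_n n) x *\<^sub>R ((\<Sum>l. a l * Ev (II n) b (nrm n x) ^ l) * cnj (?Pp (nrm n x)))) = integral\<^sup>L (Rn n) (f k)"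
    ultimately show ?thesis by simp
  qed
  have "sph_int n (\<lambda>y. (\<Sum>l. a l * Ev (II n) b y ^ l) * cnj (Y y)) = sph_int n (\<lambda>y. (\<Sum>l. a l * Ev (II n) b y ^ l) * cnj (?Pp y))"
    by (rule sph_int_Y[OF Yeq pm gm])
  also have "\<dots> = a k * sph_int n (\<lambda>y. Ev (II n) b y ^ k * cnj (?Pp y))"
    unfolding sph_int_def main by simp
  also have "sph_int n (\<lambda>y. Ev (II n) b y ^ k * cnj (?Pp y)) = sph_int n (\<lambda>y. Ev (II n) b y ^ k * cnj (Y y))"
    by (rule sph_int_Y[OF Yeq pm gkm, symmetric])
  finally show ?thesis .
qed

lemma summc_crit:
  assumes "\<And>l. norm (a l) \<le> C * 2 ^ l / fact l"
  shows "summc a"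
  unfolding summc_def
proof
  fix R :: real
  have s: "summable (\<lambda>l. C * ((2 * \<bar>R\<bar>) ^ l /\<^sub>R fact l))"
    by (intro summable_mult summable_exp_generic)
  show "summable (\<lambda>l. norm (a l) * R ^ l)"
  proof (rule summable_comparison_test'[OF s, where N=0])
    fix l :: nat
    have "norm (norm (a l) * R ^ l) = norm (a l) * \<bar>R\<bar> ^ l" by (simp add: abs_mult power_abs)
    also have "\<dots> \<le> (C * 2 ^ l / fact l) * \<bar>R\<bar> ^ l" by (rule mult_right_mono[OF assms]) simp
    also have "\<dots> = C * ((2 * \<bar>R\<bar>) ^ l /\<^sub>R fact l)" by (simp add: power_mult_distrib field_simps)
    finally show "norm (norm (a l) * R ^ l) \<le> C * ((2 * \<bar>R\<bar>) ^ l /\<^sub>R fact l)" .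
  qed
qed

lemma summc_mult: "summc a \<Longrightarrow> summc (\<lambda>l. c * a l)"
  unfolding summc_def norm_mult by (auto simp: mult.assoc intro: summable_mult)

lemma powser_summable:
  assumes "summc a" shows "summable (\<lambda>l. a l * w ^ l)"
proof (rule summable_norm_cancel)
  show "summable (\<lambda>l. norm (a l * w ^ l))"
    using assms unfolding summc_def by (simp add: norm_mult norm_power)
qed

lemma series_L2:
  assumes sa: "summc a"
  shows "sph_L2 n (\<lambda>y. \<Sum>l. a l * Ev (II n) b y ^ l)"
proof -
  have gm[measurable]: "(\<lambda>x. \<Sum>l. a l * Ev (II n) b (nrm n x) ^ l) \<in> borel_measurable (Rn n)"
    by (rule powser_meas[OF sa])
  define K where "K = (\<Sum>l. norm (a l) * (\<Sum>i\<in>II n. norm (b i)) ^ l)"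
  have bnd: "norm (\<Sum>l. a l * Ev (II n) b (nrm n x) ^ l) \<le> K" for x
    unfolding K_def by (rule powser_bound[OF sa Ev_nrm_bound])
  have "integrable (Rn n) (\<lambda>x. indicator (unit_ball_n n) x *\<^sub>R (cmod (\<Sum>l. a l * Ev (II n) b (nrm n x) ^ l))\<^sup>2)"
  proof (rule integrableI_bounded_set_indicator[OF ball_sets _ ball_fin, where B="K^2"])
    show "(\<lambda>x. (cmod (\<Sum>l. a l * Ev (II n) b (nrm n x) ^ l))\<^sup>2) \<in> borel_measurable (Rn n)" by measurable
    show "AE x in Rn n. x \<in> unit_ball_n n \<longrightarrow> norm ((cmod (\<Sum>l. a l * Ev (II n) b (nrm n x) ^ l))\<^sup>2) \<le> K\<^sup>2"
      by (intro AE_I2 impI) (simp add: power_mono bnd)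
  qed
  then show ?thesis unfolding sph_L2_def by (simp add: gm)
qed

lemma fcalc_series:
  assumes sa: "summc a" and sa': "summc a'" and iso: "isoc n b"
    and rel: "\<And>k. a' k = complex_of_real (F (lapl_ev n k)) * a k"
  shows "fcalc n F (\<lambda>y. \<Sum>l. a l * Ev (II n) b y ^ l) (\<lambda>y. \<Sum>l. a' l * Ev (II n) b y ^ l)"
  unfolding fcalc_def sph_inner_def
proof (intro conjI allI impI series_L2 sa sa')
  fix k Y assume Y: "sph_harm n k Y"
  show "sph_int n (\<lambda>x. (\<Sum>l. a' l * Ev (II n) b x ^ l) * cnj (Y x)) =
        complex_of_real (F (lapl_ev n k)) * sph_int n (\<lambda>x. (\<Sum>l. a l * Ev (II n) b x ^ l) * cnj (Y x))"
    using series_inner[OF Y iso sa] series_inner[OF Y iso sa'] rel[of k] by simp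
qed

lemma iso_rho:
  assumes nm: "(n, m) \<in> {(2, 2), (3, 4), (5, 8)}"
  shows "(\<Sum>j=1..n+1. (rho n m z j)^2) = 0"
proof -
  consider "n = 2" "m = 2" | "n = 3" "m = 4" | "n = 5" "m = 8" using nm by auto
  then show ?thesis
  proof cases
    case 1
    have "(\<Sum>j=1..3. (rho22 z j)^2) = 0"
      by (simp add: numeral_eq_Suc rho22_def power2_eq_square field_simps)
    then show ?thesis using 1 by (simp add: rho_def)
  next
    case 2
    have "(\<Sum>j=1..4. (rho34 z j)^2) = 0"
      by (simp add: numeral_eq_Suc rho34_def power2_eq_square algebra_simps)
    then show ?thesis using 2 by (simp add: rho_def)
  next
    case 3
    have "(\<Sum>j=1..6. (rho58 z j)^2) = 0"
      by (simp add: numeral_eq_Suc rho58_def power2_eq_square algebra_simps)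
    then show ?thesis using 3 by (simp add: rho_def)
  qed
qed

lemma Ev_rot:
  assumes j: "j \<in> II n" and k: "k \<in> II n" and jk: "j \<noteq> k"
  shows "Ev (II n) b (rot k j t x) = Ev (II n) b x
     + complex_of_real (x j * cos t + x k * sin t - x j) * b j
     + complex_of_real (x k * cos t - x j * sin t - x k) * b k"
proof -
  have "rot k j t x = (x(j := x j * cos t + x k * sin t))(k := x k * cos t - x j * sin t)"
    using jk by (simp add: rot_def)
  then have "Ev (II n) b (rot k j t x) = Ev (II n) b (x(j := x j * cos t + x k * sin t))
      + complex_of_real (x k * cos t - x j * sin t - (x(j := x j * cos t + x k * sin t)) k) * b k"
    using Ev_upd[OF finite_II k] by simp
  also have "Ev (II n) b (x(j := x j * cos t + x k * sin t)) = Ev (II n) b x + complex_of_real (x j * cos t + x k * sin t - x j) * b j"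
    by (rule Ev_upd[OF finite_II j])
  finally show ?thesis using jk by simp
qed

lemma rot_deriv:
  assumes j: "j \<in> II n" and k: "k \<in> II n"
  shows "((\<lambda>t. exp (Ev (II n) b (rot k j t x))) has_vector_derivative
           (complex_of_real (x k) * b j - complex_of_real (x j) * b k) * exp (Ev (II n) b x)) (at 0)"
proof (cases "j = k")
  case True
  then show ?thesis by (simp add: rot_def)
next
  case False
  have d: "((\<lambda>t. Ev (II n) b (rot k j t x)) has_vector_derivative
           (complex_of_real (x k) * b j - complex_of_real (x j) * b k)) (at 0)"
    unfolding Ev_rot[OF j k False]
    by (rule has_vector_derivative_eq_rhs) (auto intro!: derivative_eq_intros simp: algebra_simps)
  have r0: "Ev (II n) b (rot k j 0 x) = Ev (II n) b x"
    unfolding Ev_rot[OF j k False] by simp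
  from field_vector_diff_chain_at[OF d, of exp "exp (Ev (II n) b (rot k j 0 x))"]
  show ?thesis unfolding r0 by (simp add: o_def)
qed

lemma exp_series: "exp (w::complex) = (\<Sum>l. complex_of_real (1 / fact l) * w ^ l)"
  unfolding exp_def by (simp add: scaleR_conv_of_real divide_inverse mult_ac)

lemma Nf_series: "(\<Sum>l. complex_of_real (h * real l / fact l) * w ^ l) = complex_of_real h * w * exp (w::complex)"
proof -
  have e: "(\<lambda>l. w ^ l /\<^sub>R fact l) sums exp w" by (rule exp_converges)
  have "(\<lambda>l. complex_of_real h * w * (w ^ l /\<^sub>R fact l)) sums (complex_of_real h * w * exp w)"
    by (rule sums_mult[OF e])
  moreover have "(\<lambda>l. complex_of_real h * w * (w ^ l /\<^sub>R fact l)) = (\<lambda>l. complex_of_real (h * real (Suc l) / fact (Suc l)) * w ^ Suc l)"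
  proof (rule ext)
    fix l
    have f: "h * real (Suc l) / fact (Suc l) = h / fact l"
      by (simp add: fact_Suc del: of_nat_Suc)
    show "complex_of_real h * w * (w ^ l /\<^sub>R fact l) = complex_of_real (h * real (Suc l) / fact (Suc l)) * w ^ Suc l"
      unfolding f by (simp add: scaleR_conv_of_real divide_inverse mult_ac)
  qed
  ultimately have "(\<lambda>l. complex_of_real (h * real (Suc l) / fact (Suc l)) * w ^ Suc l) sums (complex_of_real h * w * exp w)" by simp
  then have "(\<lambda>l. complex_of_real (h * real l / fact l) * w ^ l) sums (complex_of_real h * w * exp w + 0)"
    by (subst (asm) sums_Suc_iff) simp
  then show ?thesis by (simp add: sums_iff)
qed

lemma two_pow_bound: "1 + 2 * real l \<le> 2 * 2 ^ l"
proof (induction l)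
  case 0 then show ?case by simp
next
  case (Suc l)
  have "(1::real) \<le> 2 ^ l" by simp
  moreover have "1 + 2 * real (Suc l) = (1 + 2 * real l) + 2" by simp
  moreover have "(2::real) * 2 ^ Suc l = 2 * 2 ^ l + 2 * 2 ^ l" by simp
  ultimately show ?case using Suc by linarith
qed

lemma summc_e: "summc (\<lambda>l. complex_of_real (1 / fact l))"
  by (rule summc_crit[where C=1]) (simp only: norm_of_real, simp add: divide_right_mono)

lemma summc_N: "summc (\<lambda>l. complex_of_real (h * real l / fact l))"
proof (rule summc_crit[where C="\<bar>h\<bar>"])
  fix l
  have "real l \<le> 2 ^ l" using less_exp[of l] by (metis of_nat_le_iff of_nat_numeral of_nat_power less_imp_le)
  then have "\<bar>h\<bar> * real l \<le> \<bar>h\<bar> * 2 ^ l" by (intro mult_left_mono) auto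
  then show "norm (complex_of_real (h * real l / fact l)) \<le> \<bar>h\<bar> * 2 ^ l / fact l"
    by (simp only: norm_of_real) (simp add: abs_mult divide_right_mono)
qed

lemma summc_c:
  assumes n: "n \<ge> 2"
  shows "summc (\<lambda>l. complex_of_real (sqrt (2 * real l + real n - 1) / (fact l * sqrt (real n - 1))))"
proof (rule summc_crit[where C=2])
  fix l
  have n1: "real n - 1 \<ge> 1" using n by simp
  have "2 * real l + real n - 1 \<le> (1 + 2 * real l)^2 * (real n - 1)"
  proof -
    have "2 * real l + real n - 1 \<le> (1 + 2 * real l) * (real n - 1)"
    proof -
      have "2 * real l * 1 \<le> 2 * real l * (real n - 1)" by (rule mult_left_mono[OF n1]) simp
      moreover have "(1 + 2 * real l) * (real n - 1) = (real n - 1) + 2 * real l * (real n - 1)" by (simp add: algebra_simps)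
      ultimately show ?thesis by simp
    qed
    also have "\<dots> \<le> (1 + 2 * real l)^2 * (real n - 1)"
      using n1 by (intro mult_right_mono) (auto simp: power2_eq_square)
    finally show ?thesis .
  qed
  then have "sqrt (2 * real l + real n - 1) \<le> (1 + 2 * real l) * sqrt (real n - 1)"
  proof -
    have "sqrt (2 * real l + real n - 1) \<le> sqrt ((1 + 2 * real l)^2 * (real n - 1))"
      by (rule real_sqrt_le_mono) fact
    also have "\<dots> = (1 + 2 * real l) * sqrt (real n - 1)"
      by (simp add: real_sqrt_mult)
    finally show ?thesis .
  qed
  also have "\<dots> \<le> 2 * 2 ^ l * sqrt (real n - 1)"
    by (rule mult_right_mono[OF two_pow_bound]) (use n in simp)
  finally have "sqrt (2 * real l + real n - 1) / sqrt (real n - 1) \<le> 2 * 2 ^ l"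
    using n1 by (simp add: divide_le_eq)
  then show "norm (complex_of_real (sqrt (2 * real l + real n - 1) / (fact l * sqrt (real n - 1)))) \<le> 2 * 2 ^ l / fact l"
    using n1 by (simp only: norm_of_real) (simp add: divide_right_mono field_simps)
qed

lemma powr_quarter_sq: "(t::real) > 0 \<Longrightarrow> (t^2) powr (1/4) = sqrt t"
proof -
  assume t: "t > 0"
  have "t^2 = t powr (real 2)" using t by (simp add: powr_realpow)
  then have "(t^2) powr (1/4) = t powr (1/2)" by (simp add: powr_powr)
  then show ?thesis using t by (simp add: powr_half_sqrt)
qed

lemma relM:
  assumes n: "n \<ge> 2"
  shows "complex_of_real (sqrt (2 * real kk + real n - 1) / (fact kk * sqrt (real n - 1)))
     = complex_of_real (sqrt (2 / (real n - 1)) * lapl_ev n kk powr (1/4)) * complex_of_real (1 / fact kk)"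
proof -
  define t where "t = real kk + (real n - 1) / 2"
  have rn: "real n \<ge> 2" using n by simp
  have t: "t > 0" unfolding t_def using rn by (simp add: add_nonneg_pos)
  have n1: "real n - 1 > 0" using n by simp
  have "sqrt (2 / (real n - 1)) * lapl_ev n kk powr (1/4) = sqrt (2 / (real n - 1)) * sqrt t"
    unfolding lapl_ev_def t_def[symmetric] using t by (simp add: powr_quarter_sq)
  also have "\<dots> = sqrt (2 * t / (real n - 1))" by (simp add: real_sqrt_mult[symmetric])
  also have "2 * t = 2 * real kk + real n - 1" by (simp add: t_def field_simps)
  also have "sqrt ((2 * real kk + real n - 1) / (real n - 1)) = sqrt (2 * real kk + real n - 1) / sqrt (real n - 1)"
    by (simp add: real_sqrt_divide)
  finally have e: "sqrt (2 / (real n - 1)) * lapl_ev n kk powr (1/4) = sqrt (2 * real kk + real n - 1) / sqrt (real n - 1)" .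
  show ?thesis unfolding of_real_mult[symmetric] e by simp
qed

lemma relN:
  assumes n: "n \<ge> 2"
  shows "complex_of_real (h * real kk / fact kk)
     = complex_of_real (h * (sqrt (lapl_ev n kk) - (real n - 1) / 2)) * complex_of_real (1 / fact kk)"
proof -
  have t: "real kk + (real n - 1) / 2 \<ge> 0" using n by simp
  have "sqrt (lapl_ev n kk) = real kk + (real n - 1) / 2" unfolding lapl_ev_def using t by simp
  then show ?thesis unfolding of_real_mult[symmetric] by simp
qed

lemma sum_alg:
  fixes X B :: "nat \<Rightarrow> complex"
  shows "(\<Sum>j\<in>J. (- \<i> * X j) * (- \<i> * H * ((Xk * B j - X j * Bk) * e)))
     = (- H * e * Xk) * (\<Sum>j\<in>J. X j * B j) + (H * e * Bk) * (\<Sum>j\<in>J. X j * X j)"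
proof -
  have pt: "(- \<i> * X j) * (- \<i> * H * ((Xk * B j - X j * Bk) * e)) = (- H * e * Xk) * (X j * B j) + (H * e * Bk) * (X j * X j)" for j
  proof -
    have "(- \<i> * X j) * (- \<i> * H * ((Xk * B j - X j * Bk) * e)) = (\<i> * \<i>) * (X j * H * ((Xk * B j - X j * Bk) * e))"
      by (simp add: algebra_simps)
    also have "\<dots> = - (X j * H * ((Xk * B j - X j * Bk) * e))" by simp
    finally show ?thesis by (simp add: algebra_simps)
  qed
  show ?thesis unfolding pt sum.distrib sum_distrib_left ..
qed

theorem mainTheorem12:
  fixes n m :: nat and hbar :: real and z :: "nat \<Rightarrow> complex" and k :: nat
  assumes nm: "(n, m) \<in> {(2, 2), (3, 4), (5, 8)}"
    and hbar: "hbar > 0"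
    and k: "k \<in> {1..n+1}"
  defines "\<alpha> \<equiv> rho n m z"
  shows "A_op n hbar k (coh n hbar \<alpha>) (\<lambda>x. cnj (\<alpha> k) * coh n hbar \<alpha> x)
       \<and> M_op n (\<lambda>x. exp (dotc n x \<alpha> / complex_of_real hbar)) (coh n hbar \<alpha>)
       \<and> E_op n hbar k (\<lambda>x. exp (dotc n x \<alpha> / complex_of_real hbar))
                       (\<lambda>x. cnj (\<alpha> k) * exp (dotc n x \<alpha> / complex_of_real hbar))"
proof -
  have n2: "n \<ge> 2" using nm by auto
  have kI: "k \<in> II n" using k by (simp add: II_def)
  define b where "b = (\<lambda>j. cnj (\<alpha> j) / complex_of_real hbar)"
  have dE: "\<And>x. dotc n x \<alpha> / complex_of_real hbar = Ev (II n) b x"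
    unfolding dotc_def Ev_def b_def II_def by (simp only: sum_divide_distrib times_divide_eq_right)
  have iso: "isoc n b"
  proof -
    have "(\<Sum>j\<in>II n. (b j)^2) = cnj (\<Sum>j=1..n+1. (\<alpha> j)^2) / (complex_of_real hbar)^2"
    proof -
      have "(\<Sum>j\<in>II n. (b j)^2) = (\<Sum>j=1..n+1. (cnj (\<alpha> j))^2) / (complex_of_real hbar)^2"
        unfolding b_def II_def by (simp only: power_divide sum_divide_distrib)
      also have "(\<Sum>j=1..n+1. (cnj (\<alpha> j))^2) = cnj (\<Sum>j=1..n+1. (\<alpha> j)^2)"
        by (simp only: cnj_sum complex_cnj_power)
      finally show ?thesis .
    qed
    also have "(\<Sum>j=1..n+1. (\<alpha> j)^2) = 0" unfolding \<alpha>_def by (rule iso_rho[OF nm])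
    finally show ?thesis unfolding isoc_def by simp
  qed
  define ae where "ae = (\<lambda>l. complex_of_real (1 / fact l))"
  define ac where "ac = (\<lambda>l. complex_of_real (sqrt (2 * real l + real n - 1) / (fact l * sqrt (real n - 1))))"
  define aN where "aN = (\<lambda>l. complex_of_real (hbar * real l / fact l))"
  have sae: "summc ae" unfolding ae_def by (rule summc_e)
  have sac: "summc ac" unfolding ac_def by (rule summc_c[OF n2])
  have saN: "summc aN" unfolding aN_def by (rule summc_N)
  define expf where "expf = (\<lambda>x. exp (dotc n x \<alpha> / complex_of_real hbar))"
  have expf_eq: "expf = (\<lambda>y. \<Sum>l. ae l * Ev (II n) b y ^ l)"
    by (simp add: expf_def dE exp_series ae_def fun_eq_iff)
  have coh_eq: "coh n hbar \<alpha> = (\<lambda>y. \<Sum>l. ac l * Ev (II n) b y ^ l)"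
    unfolding coh_def by (simp add: dE ac_def fun_eq_iff)
  define Nf where "Nf = (\<lambda>y. \<Sum>l. aN l * Ev (II n) b y ^ l)"
  have Nf_eq: "Nf y = complex_of_real hbar * Ev (II n) b y * exp (Ev (II n) b y)" for y
    unfolding Nf_def aN_def by (rule Nf_series)
  have rM: "ac kk = complex_of_real (sqrt (2 / (real n - 1)) * lapl_ev n kk powr (1/4)) * ae kk" for kk
    unfolding ac_def ae_def by (rule relM[OF n2])
  have rN: "aN kk = complex_of_real (hbar * (sqrt (lapl_ev n kk) - (real n - 1) / 2)) * ae kk" for kk
    unfolding aN_def ae_def by (rule relN[OF n2])
  have M1: "M_op n expf (coh n hbar \<alpha>)"
    unfolding M_op_def expf_eq coh_eq
    by (rule fcalc_series[OF sae sac iso]) (rule rM)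
  have N1: "N_op n hbar expf Nf"
    unfolding N_op_def expf_eq Nf_def
    by (rule fcalc_series[OF sae saN iso]) (rule rN)
  have E1: "E_op n hbar k expf (\<lambda>x. cnj (\<alpha> k) * expf x)"
    unfolding E_op_def
  proof (intro exI conjI ballI)
    show "N_op n hbar expf Nf" by (rule N1)
    fix x assume xS: "x \<in> Sph n"
    have sq: "sqnorm n x = 1" using xS by (simp add: Sph_def)
    define D where "D j = (complex_of_real (x k) * b j - complex_of_real (x j) * b k) * exp (Ev (II n) b x)" for j
    have der: "((\<lambda>t. expf (rot k j t x)) has_vector_derivative D j) (at 0)" if j: "j \<in> {1..n+1}" for j
    proof -
      have "j \<in> II n" using j by (simp add: II_def)
      from rot_deriv[OF this kI, of b x] show ?thesis by (simp add: expf_def dE D_def)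
    qed
    show "(\<lambda>t. expf (rot k j t x)) differentiable (at 0)" if "j \<in> {1..n+1}" for j
      using der[OF that] by (rule differentiableI_vector)
    have Lt: "Lt k j expf x = D j" if "j \<in> {1..n+1}" for j
      unfolding Lt_def by (rule vector_derivative_at[OF der[OF that]])
    have "(\<Sum>j=1..n+1. (- \<i> * complex_of_real (x j)) * (- \<i> * complex_of_real hbar * Lt k j expf x))
        = (\<Sum>j=1..n+1. (- \<i> * complex_of_real (x j)) * (- \<i> * complex_of_real hbar *
             ((complex_of_real (x k) * b j - complex_of_real (x j) * b k) * exp (Ev (II n) b x))))"
      by (intro sum.cong refl) (simp add: Lt D_def)
    also have "\<dots> = (- complex_of_real hbar * exp (Ev (II n) b x) * complex_of_real (x k)) * (\<Sum>j=1..n+1. complex_of_real (x j) * b j)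
         + (complex_of_real hbar * exp (Ev (II n) b x) * b k) * (\<Sum>j=1..n+1. complex_of_real (x j) * complex_of_real (x j))"
      by (rule sum_alg)
    also have "(\<Sum>j=1..n+1. complex_of_real (x j) * b j) = Ev (II n) b x" by (simp add: Ev_def II_def)
    also have "(\<Sum>j=1..n+1. complex_of_real (x j) * complex_of_real (x j)) = complex_of_real (sqnorm n x)"
      by (simp add: sqnorm_def power2_eq_square)
    finally have S: "(\<Sum>j=1..n+1. (- \<i> * complex_of_real (x j)) * (- \<i> * complex_of_real hbar * Lt k j expf x))
       = - complex_of_real hbar * exp (Ev (II n) b x) * complex_of_real (x k) * Ev (II n) b x
         + complex_of_real hbar * exp (Ev (II n) b x) * b k"
      using sq by simp
    have hb: "complex_of_real hbar * b k = cnj (\<alpha> k)" using hbar by (simp add: b_def)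
    show "cnj (\<alpha> k) * expf x =
        (\<Sum>j=1..n+1. (- \<i> * complex_of_real (x j)) * (- \<i> * complex_of_real hbar * Lt k j expf x)) +
        complex_of_real (x k) * Nf x"
      unfolding S Nf_eq hb[symmetric] by (simp add: expf_def dE algebra_simps)
  qed
  have M3: "M_op n (\<lambda>x. cnj (\<alpha> k) * expf x) (\<lambda>x. cnj (\<alpha> k) * coh n hbar \<alpha> x)"
  proof -
    let ?c = "cnj (\<alpha> k)"
    have e1: "(\<lambda>x. ?c * expf x) = (\<lambda>y. \<Sum>l. (?c * ae l) * Ev (II n) b y ^ l)"
      unfolding expf_eq by (auto simp: fun_eq_iff suminf_mult[OF powser_summable[OF sae]] mult.assoc)
    have e2: "(\<lambda>x. ?c * coh n hbar \<alpha> x) = (\<lambda>y. \<Sum>l. (?c * ac l) * Ev (II n) b y ^ l)"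
      unfolding coh_eq by (auto simp: fun_eq_iff suminf_mult[OF powser_summable[OF sac]] mult.assoc)
    show ?thesis
      unfolding M_op_def e1 e2
      by (rule fcalc_series[OF summc_mult[OF sae] summc_mult[OF sac] iso]) (simp only: rM mult_ac)
  qed
  have A1: "A_op n hbar k (coh n hbar \<alpha>) (\<lambda>x. cnj (\<alpha> k) * coh n hbar \<alpha> x)"
    unfolding A_op_def using M1 E1 M3 by blast
  show ?thesis using A1 M1 E1 unfolding expf_def by simp
qed

end
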